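(* Let $n\ge 2$ be an integer and $\Pi_1,\Pi_2,\Pi_3>0$. Let $\mathbb{D}^2$ be the $n\times n$ circulant matrix with first row $(-2,1,0,\ldots,0,1)$, and let $A=\begin{bmatrix}0&I\\ \mathbb{D}^2&0\end{bmatrix}$, $B=\begin{bmatrix}0\\ I\end{bmatrix}$. Consider the linear quadratic regulator problem: minimize $$\int_0^\infty \boldsymbol{\Phi}(\tau)^T\begin{bmatrix}I-\Pi_1\mathbb{D}^2&0\\0&\Pi_2 I\end{bmatrix}\boldsymbol{\Phi}(\tau)+\frac{1}{\Pi_3^2}\boldsymbol{\omega}(\tau)^T\boldsymbol{\omega}(\tau)\,d\tau$$ subject to $\frac{d}{d\tau}\boldsymbol{\Phi}(\tau)=A\boldsymbol{\Phi}(\tau)+B\boldsymbol{\omega}(\tau)$, $\boldsymbol{\Phi}(\tau)\in\mathbb{R}^{2n}$, $\boldsymbol{\omega}(\tau)\in\mathbb{R}^n$. Then the optimal feedback gain $K$ (optimal control $\boldsymbol{\omega}=-K\boldsymbol{\Phi}$) is $K=\begin{bmatrix}K_1&K_2\end{bmatrix}$ with circulant matrices $$K_1=F^{-1}\mathrm{diag}\big(\hat{K}_0(\kappa)\big)F,\qquad K_2=F^{-1}\mathrm{diag}\Big(\sqrt{2\hat{K}_0(\kappa)+\Pi_2\Pi_3^2}\Big)F,$$ where, for $\kappa\in\{0,\ldots,n-1\}$, $$\hat{K}_0(\kappa)=\hat{D}_{\kappa\kappa}+\sqrt{\hat{D}_{\kappa\kappa}^2+\Pi_3^2\big(1-\Pi_1\hat{D}_{\kappa\kappa}\big)},\qquad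 \hat{D}_{\kappa\kappa}=-4\sin^2\!\left(\frac{\pi\kappa}{n}\right).$$ Equivalently, $\hat{K}(\kappa)=\begin{bmatrix}\hat{K}_0(\kappa)&\sqrt{2\hat{K}_0(\kappa)+\Pi_2\Pi_3^2}\end{bmatrix}$.
   Context: $F$ denotes the $n\times n$ unitary discrete Fourier transform matrix, $F_{kj}=n^{-1/2}e^{-2\pi i kj/n}$, $k,j\in\{0,\ldots,n-1\}$; $\mathrm{diag}(f(\kappa))$ is the diagonal matrix with $\kappa$-th diagonal entry $f(\kappa)$. The optimal LQR gain for cost $\int\boldsymbol{\Phi}^TQ\boldsymbol{\Phi}+\boldsymbol{\omega}^TR\boldsymbol{\omega}$ is $K=R^{-1}B^TP$ with $P$ the symmetric positive definite (stabilizing) solution of $PA+A^TP-PBR^{-1}B^TP+Q=0$. The weight $I-\Pi_1\mathbb{D}^2$ is a discretized Sobolev-type ($\mathcal{H}^1$-like) weight, with $\Pi_1=\alpha^2/\Delta x^2$ weighting potential energy, $\Pi_2$ kinetic energy, $1/\Pi_3$ control effort. *)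

theory Defs
  imports Complex_Main "Jordan_Normal_Form.Matrix" "Jordan_Normal_Form.Gauss_Jordan_Elimination"
begin

text \<open>Entry (i,j) collects the contributions of the superdiagonal and subdiagonal (cyclic)
  neighbours, so that for n = 2 the off-diagonal entry is 1 + 1 = 2.\<close>
definition circD2 :: "nat \<Rightarrow> real mat" where
  "circD2 n = mat n n (\<lambda>(i,j).
      (if j = (i + 1) mod n then 1 else 0) + (if i = (j + 1) mod n then 1 else 0)
      - (if i = j then 2 else 0))"

definition sysA :: "nat \<Rightarrow> real mat" where
  "sysA n = four_block_mat (0\<^sub>m n n) (1\<^sub>m n) (circD2 n) (0\<^sub>m n n)"

definition sysB :: "nat \<Rightarrow> real mat" where
  "sysB n = four_block_mat (0\<^sub>m n n) (0\<^sub>m n 0) (1\<^sub>m n) (0\<^sub>m n 0)"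

definition weightQ :: "nat \<Rightarrow> real \<Rightarrow> real \<Rightarrow> real mat" where
  "weightQ n Pi1 Pi2 = four_block_mat (1\<^sub>m n - Pi1 \<cdot>\<^sub>m circD2 n) (0\<^sub>m n n)
                                       (0\<^sub>m n n) (Pi2 \<cdot>\<^sub>m 1\<^sub>m n)"

definition weightR :: "nat \<Rightarrow> real \<Rightarrow> real mat" where
  "weightR n Pi3 = (1 / Pi3 ^ 2) \<cdot>\<^sub>m 1\<^sub>m n"

definition Rinv :: "nat \<Rightarrow> real \<Rightarrow> real mat" where
  "Rinv n Pi3 = the (mat_inverse (weightR n Pi3))"

definition sym_pos_def :: "nat \<Rightarrow> real mat \<Rightarrow> bool" where
  "sym_pos_def m P \<longleftrightarrow> P \<in> carrier_mat m m \<and> transpose_mat P = P \<and>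
     (\<forall>x \<in> carrier_vec m. x \<noteq> 0\<^sub>v m \<longrightarrow> scalar_prod x (P *\<^sub>v x) > 0)"

definition riccati_spd_solution :: "nat \<Rightarrow> real \<Rightarrow> real \<Rightarrow> real \<Rightarrow> real mat \<Rightarrow> bool" where
  "riccati_spd_solution n Pi1 Pi2 Pi3 P \<longleftrightarrow> sym_pos_def (2 * n) P \<and>
     P * sysA n + transpose_mat (sysA n) * P
       - P * sysB n * Rinv n Pi3 * transpose_mat (sysB n) * P + weightQ n Pi1 Pi2
     = 0\<^sub>m (2 * n) (2 * n)"

definition lqr_gain :: "nat \<Rightarrow> real \<Rightarrow> real mat \<Rightarrow> real mat" where
  "lqr_gain n Pi3 P = Rinv n Pi3 * transpose_mat (sysB n) * P"

definition dft :: "nat \<Rightarrow> complex mat" where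
  "dft n = mat n n (\<lambda>(k,j). complex_of_real (1 / sqrt (real n))
                       * exp (- 2 * complex_of_real pi * \<i> * of_nat (k * j) / of_nat n))"

definition Dhat :: "nat \<Rightarrow> nat \<Rightarrow> real" where
  "Dhat n k = - 4 * (sin (pi * real k / real n))^2"

definition K0hat :: "nat \<Rightarrow> real \<Rightarrow> real \<Rightarrow> nat \<Rightarrow> real" where
  "K0hat n Pi1 Pi3 k = Dhat n k + sqrt ((Dhat n k)^2 + Pi3^2 * (1 - Pi1 * Dhat n k))"

end

theory Submission
  imports Defs "Jordan_Normal_Form.Determinant"
begin

definition ee :: "nat \<Rightarrow> int \<Rightarrow> complex" where
  "ee n t = cis (2 * pi * real_of_int t / real n)"

lemma ee_add: "ee n (a + b) = ee n a * ee n b"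
  unfolding ee_def cis_mult by (simp add: add_divide_distrib distrib_left)

lemma ee_mult_nat: "ee n t ^ j = ee n (t * int j)"
  unfolding ee_def DeMoivre by (simp add: algebra_simps)

lemma ee_cnj: "cnj (ee n t) = ee n (- t)"
  unfolding ee_def cis_cnj by simp

lemma ee_zero[simp]: "ee n 0 = 1" unfolding ee_def by simp

lemma ee_eq_1: assumes n: "n > 0" shows "ee n t = 1 \<longleftrightarrow> int n dvd t"
proof
  assume "ee n t = 1"
  hence "cos (2 * pi * real_of_int t / real n) = 1" unfolding ee_def
    by (metis Re_complex_of_real cis.sel(1) of_real_1)
  then obtain m :: int where m: "2 * pi * real_of_int t / real n = real_of_int m * 2 * pi"
    unfolding cos_one_2pi_int by blast
  hence "real_of_int t = real_of_int m * real n" using n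
    by (simp add: field_simps)
  hence "t = m * int n" by (metis of_int_eq_iff of_int_mult of_int_of_nat_eq)
  thus "int n dvd t" by simp
next
  assume "int n dvd t"
  then obtain m where t: "t = int n * m" by blast
  have "2 * pi * real_of_int t / real n = 2 * pi * real_of_int m" using n unfolding t by simp
  thus "ee n t = 1" unfolding ee_def
    by (simp add: cis.ctr complex_eq_iff sin_int_2pin cos_int_2pin)
qed

lemma ee_orth: assumes n: "n > 0"
  shows "(\<Sum>j<n. ee n (int j * t)) = (if int n dvd t then of_nat n else 0)"
proof (cases "int n dvd t")
  case True
  then obtain m where t: "t = int n * m" by blast
  have "ee n (int j * t) = 1" for j using n unfolding ee_eq_1[OF n] t by simp
  thus ?thesis using True by simp
next
  case False
  have "(\<Sum>j<n. ee n (int j * t)) = (\<Sum>j<n. ee n t ^ j)"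
    by (simp add: ee_mult_nat mult.commute)
  also have "\<dots> = 0"
  proof -
    have ne: "ee n t \<noteq> 1" using False ee_eq_1[OF n] by simp
    have "ee n t ^ n = 1" unfolding ee_mult_nat ee_eq_1[OF n] by simp
    thus ?thesis using ne unfolding sum_gp_strict by simp
  qed
  finally show ?thesis using False by simp
qed

definition FH :: "nat \<Rightarrow> complex mat" where
  "FH n = mat n n (\<lambda>(j,k). complex_of_real (1 / sqrt (real n)) * ee n (int (j*k)))"

lemma FH_carrier[simp]: "FH n \<in> carrier_mat n n" unfolding FH_def by simp
lemma dft_carrier[simp]: "dft n \<in> carrier_mat n n" unfolding dft_def by simp
lemma dims_F[simp]: "dim_row (dft n) = n" "dim_col (dft n) = n" "dim_row (FH n) = n" "dim_col (FH n) = n"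
  unfolding dft_def FH_def by auto

lemma exp_ee: "exp (- 2 * complex_of_real pi * \<i> * of_nat m / of_nat n) = ee n (- int m)"
proof -
  have "- 2 * complex_of_real pi * \<i> * of_nat m / of_nat n
     = \<i> * complex_of_real (2 * pi * real_of_int (- int m) / real n)"
    by (simp add: field_simps)
  note h = this
  show ?thesis unfolding ee_def cis_conv_exp by (simp only: h)
qed

lemma dft_entry: "i < n \<Longrightarrow> j < n \<Longrightarrow>
  dft n $$ (i,j) = complex_of_real (1 / sqrt (real n)) * ee n (- int (i*j))"
  unfolding dft_def using exp_ee[of "i*j" n] by simp

lemma FH_entry: "i < n \<Longrightarrow> j < n \<Longrightarrow>
  FH n $$ (i,j) = complex_of_real (1 / sqrt (real n)) * ee n (int (i*j))"
  unfolding FH_def by simp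

lemma csq: "n > 0 \<Longrightarrow> complex_of_real (1 / sqrt (real n)) * complex_of_real (1 / sqrt (real n))
   = 1 / of_nat n"
proof -
  assume n: "n > 0"
  have h: "(1 / sqrt (real n)) * (1 / sqrt (real n)) = 1 / real n" using n
    by (simp add: real_sqrt_mult[symmetric])
  have "complex_of_real (1 / sqrt (real n)) * complex_of_real (1 / sqrt (real n))
    = complex_of_real ((1 / sqrt (real n)) * (1 / sqrt (real n)))" by (simp only: of_real_mult)
  also have "\<dots> = complex_of_real (1 / real n)" by (simp only: h)
  also have "\<dots> = 1 / of_nat n" by simp
  finally show ?thesis .
qed

lemma dvd_diff_small: assumes "i < n" "j < n" shows "int n dvd (int j - int i) \<longleftrightarrow> i = j"
proof
  assume d: "int n dvd (int j - int i)"
  show "i = j"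
  proof (rule ccontr)
    assume "i \<noteq> j"
    hence "int j - int i \<noteq> 0" by simp
    from dvd_imp_le_int[OF this d] assms show False by simp
  qed
qed simp

lemma F_FH: assumes n: "n > 0" shows "dft n * FH n = 1\<^sub>m n"
proof (rule eq_matI)
  fix i j assume i: "i < dim_row (1\<^sub>m n)" and j: "j < dim_col (1\<^sub>m n)"
  hence i: "i < n" and j: "j < n" by auto
  let ?c = "complex_of_real (1 / sqrt (real n))"
  have "(dft n * FH n) $$ (i,j) = (\<Sum>l<n. dft n $$ (i,l) * FH n $$ (l,j))"
    using i j by (simp add: scalar_prod_def lessThan_atLeast0)
  also have "\<dots> = (\<Sum>l<n. (?c * ?c) * ee n (int l * (int j - int i)))"
    by (rule sum.cong, simp, simp add: dft_entry FH_entry i j ee_add[symmetric] algebra_simps)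
  also have "\<dots> = (?c * ?c) * (\<Sum>l<n. ee n (int l * (int j - int i)))"
    by (simp add: sum_distrib_left)
  also have "\<dots> = 1\<^sub>m n $$ (i,j)"
    unfolding ee_orth[OF n] csq[OF n] dvd_diff_small[OF i j] using i j n by auto
  finally show "(dft n * FH n) $$ (i,j) = 1\<^sub>m n $$ (i,j)" .
qed auto

lemma FH_F: assumes n: "n > 0" shows "FH n * dft n = 1\<^sub>m n"
proof (rule eq_matI)
  fix i j assume i: "i < dim_row (1\<^sub>m n)" and j: "j < dim_col (1\<^sub>m n)"
  hence i: "i < n" and j: "j < n" by auto
  let ?c = "complex_of_real (1 / sqrt (real n))"
  have "(FH n * dft n) $$ (i,j) = (\<Sum>l<n. FH n $$ (i,l) * dft n $$ (l,j))"
    using i j by (simp add: scalar_prod_def lessThan_atLeast0)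
  also have "\<dots> = (\<Sum>l<n. (?c * ?c) * ee n (int l * (int i - int j)))"
    by (rule sum.cong, simp, simp add: dft_entry FH_entry i j ee_add[symmetric] algebra_simps)
  also have "\<dots> = (?c * ?c) * (\<Sum>l<n. ee n (int l * (int i - int j)))"
    by (simp add: sum_distrib_left)
  also have "\<dots> = 1\<^sub>m n $$ (i,j)"
    unfolding ee_orth[OF n] csq[OF n] dvd_diff_small[OF j i] using i j n by auto
  finally show "(FH n * dft n) $$ (i,j) = 1\<^sub>m n $$ (i,j)" .
qed auto

lemma dft_inverse: assumes n: "n > 0" shows "the (mat_inverse (dft n)) = FH n"
proof -
  have U: "dft n \<in> Units (ring_mat TYPE(complex) n undefined)"
    unfolding Units_def ring_mat_def using F_FH[OF n] FH_F[OF n]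
    by (auto intro!: bexI[of _ "FH n"])
  obtain B where B: "mat_inverse (dft n) = Some B"
    using mat_inverse(1)[OF dft_carrier[of n], of undefined] U by (cases "mat_inverse (dft n)") auto
  from mat_inverse(2)[OF dft_carrier B]
  have "dft n * B = 1\<^sub>m n" "B \<in> carrier_mat n n" by auto
  hence "FH n * (dft n * B) = FH n" by simp
  hence "B = FH n" using \<open>B \<in> carrier_mat n n\<close> FH_F[OF n]
    by (metis FH_carrier assoc_mult_mat dft_carrier left_mult_one_mat)
  thus ?thesis using B by simp
qed

definition Cc :: "nat \<Rightarrow> (nat \<Rightarrow> complex) \<Rightarrow> complex mat" where
  "Cc n f = mat n n (\<lambda>(i,j). (\<Sum>l<n. f l * ee n (int l * (int i - int j))) / of_nat n)"

lemma Cc_carrier[simp]: "Cc n f \<in> carrier_mat n n" unfolding Cc_def by simp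
lemma Cc_dims[simp]: "dim_row (Cc n f) = n" "dim_col (Cc n f) = n" unfolding Cc_def by auto

lemma sq_mult_carrier[simp]: "A \<in> carrier_mat n n \<Longrightarrow> B \<in> carrier_mat n n \<Longrightarrow> A * B \<in> carrier_mat n n"
  by auto

lemma Cc_fact: assumes n: "n > 0" shows "FH n * mat_diag n f * dft n = Cc n f"
proof (rule eq_matI)
  fix i j assume "i < dim_row (Cc n f)" "j < dim_col (Cc n f)"
  hence i: "i < n" and j: "j < n" by auto
  let ?c = "complex_of_real (1 / sqrt (real n))"
  have e: "FH n * mat_diag n f = mat n n (\<lambda>(i,j). FH n $$ (i,j) * f j)"
    by (rule mat_diag_mult_right, simp)
  have "(FH n * mat_diag n f * dft n) $$ (i,j) = (\<Sum>l<n. FH n $$ (i,l) * f l * dft n $$ (l,j))"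
    unfolding e using i j by (simp add: scalar_prod_def lessThan_atLeast0)
  also have "\<dots> = (\<Sum>l<n. (?c * ?c) * (f l * ee n (int l * (int i - int j))))"
    by (rule sum.cong, simp, simp add: dft_entry FH_entry i j ee_add[symmetric] algebra_simps)
  also have "\<dots> = Cc n f $$ (i,j)"
    unfolding Cc_def csq[OF n] sum_distrib_left[symmetric] using i j by simp
  finally show "(FH n * mat_diag n f * dft n) $$ (i,j) = Cc n f $$ (i,j)" .
qed auto

lemma F_FH_cancel: "n > 0 \<Longrightarrow> X \<in> carrier_mat n k \<Longrightarrow> dft n * (FH n * X) = X"
  by (subst assoc_mult_mat[symmetric, of _ n n _ n], auto simp: F_FH)

lemma Cc_mult: assumes n: "n > 0" shows "Cc n f * Cc n g = Cc n (\<lambda>k. f k * g k)"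
proof -
  have "Cc n f * Cc n g = (FH n * mat_diag n f * dft n) * (FH n * mat_diag n g * dft n)"
    unfolding Cc_fact[OF n] ..
  also have "\<dots> = FH n * (mat_diag n f * (dft n * (FH n * (mat_diag n g * dft n))))"
    by (simp add: assoc_mult_mat[of _ n n _ n _ n])
  also have "\<dots> = FH n * (mat_diag n f * (mat_diag n g * dft n))"
    by (subst F_FH_cancel[OF n, of _ n], auto)
  also have "\<dots> = FH n * mat_diag n (\<lambda>k. f k * g k) * dft n"
    by (simp add: assoc_mult_mat[of _ n n _ n _ n, symmetric])
  finally show ?thesis unfolding Cc_fact[OF n] .
qed

lemma Cc_add: "Cc n f + Cc n g = Cc n (\<lambda>k. f k + g k)"
  by (rule eq_matI, auto simp: Cc_def sum.distrib add_divide_distrib ring_distribs)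

lemma Cc_minus: "Cc n f - Cc n g = Cc n (\<lambda>k. f k - g k)"
  by (rule eq_matI, auto simp: Cc_def sum_subtractf diff_divide_distrib ring_distribs)

lemma Cc_uminus: "- Cc n f = Cc n (\<lambda>k. - f k)"
  by (rule eq_matI, auto simp: Cc_def sum_negf)

lemma Cc_smult: "c \<cdot>\<^sub>m Cc n f = Cc n (\<lambda>k. c * f k)"
  by (rule eq_matI, auto simp: Cc_def sum_distrib_left mult.assoc)

lemma Cc_one: assumes n: "n > 0" shows "1\<^sub>m n = Cc n (\<lambda>k. 1)"
  by (rule eq_matI, auto simp: Cc_def ee_orth[OF n] dvd_diff_small n)

lemma Cc_zero: "0\<^sub>m n n = Cc n (\<lambda>k. 0)"
  by (rule eq_matI, auto simp: Cc_def)

definition fv :: "nat \<Rightarrow> nat \<Rightarrow> complex vec" where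
  "fv n k = vec n (\<lambda>j. ee n (int j * int k))"

lemma fv_carrier[simp]: "fv n k \<in> carrier_vec n" unfolding fv_def by simp
lemma fv_dim[simp]: "dim_vec (fv n k) = n" unfolding fv_def by simp

lemma Cc_eigen: assumes n: "n > 0" and k: "k < n" shows "Cc n f *\<^sub>v fv n k = f k \<cdot>\<^sub>v fv n k"
proof (rule eq_vecI)
  fix i assume "i < dim_vec (f k \<cdot>\<^sub>v fv n k)"
  hence i: "i < n" by simp
  have "(Cc n f *\<^sub>v fv n k) $ i = (\<Sum>j<n. (\<Sum>l<n. f l * ee n (int l * (int i - int j))) / of_nat n * ee n (int j * int k))"
    using i by (simp add: Cc_def fv_def scalar_prod_def lessThan_atLeast0)
  also have "\<dots> = (\<Sum>j<n. \<Sum>l<n. f l * ee n (int l * int i) / of_nat n * ee n (int j * (int k - int l)))"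
    by (rule sum.cong, simp, simp add: sum_divide_distrib sum_distrib_right,
        rule sum.cong, simp, simp add: ee_add[symmetric] algebra_simps)
  also have "\<dots> = (\<Sum>l<n. f l * ee n (int l * int i) / of_nat n * (\<Sum>j<n. ee n (int j * (int k - int l))))"
    by (subst sum.swap, simp add: sum_distrib_left)
  also have "\<dots> = (\<Sum>l<n. if l = k then f k * ee n (int k * int i) else 0)"
    by (rule sum.cong, simp, simp add: ee_orth[OF n] dvd_diff_small[OF _ k] n)
  also have "\<dots> = f k * ee n (int k * int i)" using k by simp
  also have "\<dots> = (f k \<cdot>\<^sub>v fv n k) $ i" using i by (simp add: fv_def mult.commute)
  finally show "(Cc n f *\<^sub>v fv n k) $ i = (f k \<cdot>\<^sub>v fv n k) $ i" .
qed simp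

lemma col_FH: "j < n \<Longrightarrow> col (FH n) j = complex_of_real (1 / sqrt (real n)) \<cdot>\<^sub>v fv n j"
  by (rule eq_vecI, auto simp: FH_def fv_def mult.commute)

definition symf :: "nat \<Rightarrow> (nat \<Rightarrow> real) \<Rightarrow> bool" where
  "symf n f \<longleftrightarrow> (\<forall>l. 0 < l \<and> l < n \<longrightarrow> f (n - l) = f l)"

definition Cr :: "nat \<Rightarrow> (nat \<Rightarrow> real) \<Rightarrow> real mat" where
  "Cr n f = mat n n (\<lambda>(i,j). (\<Sum>l<n. f l * cos (2 * pi * real l * (real i - real j) / real n)) / real n)"

lemma Cr_carrier[simp]: "Cr n f \<in> carrier_mat n n" unfolding Cr_def by simp
lemma Cr_dims[simp]: "dim_row (Cr n f) = n" "dim_col (Cr n f) = n" unfolding Cr_def by auto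

lemma Cr_transpose: "transpose_mat (Cr n f) = Cr n f"
proof (rule eq_matI)
  fix i j assume "i < dim_row (Cr n f)" "j < dim_col (Cr n f)"
  hence i: "i < n" and j: "j < n" by auto
  have "cos (2 * pi * real l * (real j - real i) / real n) = cos (2 * pi * real l * (real i - real j) / real n)" for l
  proof -
    have "2 * pi * real l * (real j - real i) / real n = - (2 * pi * real l * (real i - real j) / real n)"
      by (simp only: minus_divide_left) (simp add: algebra_simps)
    thus ?thesis by simp
  qed
  thus "transpose_mat (Cr n f) $$ (i,j) = Cr n f $$ (i,j)" using i j by (simp add: Cr_def)
qed auto

lemma sin_sum_zero: assumes s: "symf n f"
  shows "(\<Sum>l<n. f l * sin (2 * pi * real l * real_of_int t / real n)) = 0"
proof -
  define g where "g l = f l * sin (2 * pi * real l * real_of_int t / real n)" for l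
  define \<sigma> where "\<sigma> l = (if l = 0 then 0 else n - l)" for l :: nat
  have gs: "g (\<sigma> l) = - g l" if l: "l < n" for l
  proof (cases "l = 0")
    case False
    have "2 * pi * real (n - l) * real_of_int t / real n = 2 * pi * real_of_int t - 2 * pi * real l * real_of_int t / real n"
      using l False by (simp add: of_nat_diff field_simps)
    hence "sin (2 * pi * real (n - l) * real_of_int t / real n) = - sin (2 * pi * real l * real_of_int t / real n)"
      by (simp add: sin_diff)
    thus ?thesis using False l s unfolding g_def \<sigma>_def symf_def by simp
  qed (simp add: g_def \<sigma>_def)
  have "sum g {..<n} = sum (\<lambda>l. g (\<sigma> l)) {..<n}"
    by (rule sum.reindex_bij_witness[of _ \<sigma> \<sigma>], auto simp: \<sigma>_def)
  also have "\<dots> = - sum g {..<n}" by (simp add: gs sum_negf)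
  finally have "sum g {..<n} = 0" by simp
  thus ?thesis unfolding g_def .
qed

lemma ee_cis: "ee n t = Complex (cos (2 * pi * real_of_int t / real n)) (sin (2 * pi * real_of_int t / real n))"
  unfolding ee_def by (simp add: complex_eq_iff)

lemma Cr_Cc: assumes s: "symf n f"
  shows "map_mat complex_of_real (Cr n f) = Cc n (\<lambda>k. complex_of_real (f k))"
proof (rule eq_matI)
  fix i j assume "i < dim_row (Cc n (\<lambda>k. complex_of_real (f k)))" "j < dim_col (Cc n (\<lambda>k. complex_of_real (f k)))"
  hence i: "i < n" and j: "j < n" by auto
  let ?t = "int i - int j"
  have "(\<Sum>l<n. complex_of_real (f l) * ee n (int l * ?t))
     = (\<Sum>l<n. Complex (f l * cos (2 * pi * real l * real_of_int ?t / real n)) (f l * sin (2 * pi * real l * real_of_int ?t / real n)))"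
    by (rule sum.cong, simp, simp add: ee_cis complex_eq_iff mult.assoc)
  also have "\<dots> = Complex (\<Sum>l<n. f l * cos (2 * pi * real l * real_of_int ?t / real n)) (\<Sum>l<n. f l * sin (2 * pi * real l * real_of_int ?t / real n))"
    by (simp add: complex_eq_iff Re_sum Im_sum)
  also have "\<dots> = complex_of_real (\<Sum>l<n. f l * cos (2 * pi * real l * (real i - real j) / real n))"
    unfolding sin_sum_zero[OF s] by (simp add: complex_eq_iff)
  finally show "map_mat complex_of_real (Cr n f) $$ (i,j) = Cc n (\<lambda>k. complex_of_real (f k)) $$ (i,j)"
    using i j by (simp add: Cr_def Cc_def)
qed auto

lemma dvd_small_lt: "0 < x \<Longrightarrow> x < int n \<Longrightarrow> \<not> int n dvd x"
  using zdvd_imp_le by fastforce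

lemma dvd_succ: assumes i: "i < n" and j: "j < n"
  shows "int n dvd (int i - int j + 1) \<longleftrightarrow> j = (i + 1) mod n"
proof (cases "i + 1 < n")
  case True
  hence m: "(i + 1) mod n = i + 1" by simp
  show ?thesis
  proof
    assume d: "int n dvd (int i - int j + 1)"
    show "j = (i + 1) mod n"
    proof (rule ccontr)
      assume "j \<noteq> (i + 1) mod n"
      hence "int i - int j + 1 \<noteq> 0" using m by simp
      from dvd_imp_le_int[OF this d] True j show False by simp
    qed
  next
    assume "j = (i + 1) mod n"
    hence "j = i + 1" using m by simp
    thus "int n dvd (int i - int j + 1)" by simp
  qed
next
  case False
  hence ii: "i = n - 1" using i by simp
  hence m: "(i + 1) mod n = 0" using i by simp
  show ?thesis
  proof (cases "j = 0")
    case True thus ?thesis using m ii i by simp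
  next
    case False
    have "\<not> int n dvd (int i - int j + 1)"
      by (rule dvd_small_lt, insert False ii i j, auto)
    thus ?thesis using m False by simp
  qed
qed

lemma dvd_pred: assumes i: "i < n" and j: "j < n"
  shows "int n dvd (int i - int j - 1) \<longleftrightarrow> i = (j + 1) mod n"
proof -
  have "int n dvd (int i - int j - 1) \<longleftrightarrow> int n dvd (int j - int i + 1)"
    by (metis dvd_minus_iff minus_diff_eq diff_diff_eq2 add.commute diff_add_eq)
  thus ?thesis using dvd_succ[OF j i] by simp
qed

lemma Dhat_ee: assumes n: "n > 0"
  shows "complex_of_real (Dhat n l) = ee n (int l) + ee n (- int l) - 2"
proof -
  let ?x = "pi * real l / real n"
  have "Dhat n l = 2 * cos (2 * ?x) - 2" unfolding Dhat_def cos_double_sin by simp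
  also have "2 * ?x = 2 * pi * real_of_int (int l) / real n" by simp
  finally have "Dhat n l = 2 * cos (2 * pi * real_of_int (int l) / real n) - 2" .
  thus ?thesis unfolding ee_cis by (simp add: complex_eq_iff)
qed

lemma Dhat_sym: "symf n (Dhat n)"
  unfolding symf_def
proof (intro allI impI)
  fix l assume l: "0 < l \<and> l < n"
  have "pi * real (n - l) / real n = pi - pi * real l / real n" using l
    by (simp add: of_nat_diff field_simps)
  thus "Dhat n (n - l) = Dhat n l" unfolding Dhat_def by (simp add: sin_pi_minus)
qed

lemma circD2_carrier[simp]: "circD2 n \<in> carrier_mat n n" unfolding circD2_def by simp
lemma circD2_dims[simp]: "dim_row (circD2 n) = n" "dim_col (circD2 n) = n" unfolding circD2_def by auto

lemma circD2_Cc: assumes n: "n \<ge> 2"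
  shows "map_mat complex_of_real (circD2 n) = Cc n (\<lambda>k. complex_of_real (Dhat n k))"
proof (rule eq_matI)
  have n0: "n > 0" using n by simp
  fix i j assume "i < dim_row (Cc n (\<lambda>k. complex_of_real (Dhat n k)))" "j < dim_col (Cc n (\<lambda>k. complex_of_real (Dhat n k)))"
  hence i: "i < n" and j: "j < n" by auto
  let ?t = "int i - int j"
  have "(\<Sum>l<n. complex_of_real (Dhat n l) * ee n (int l * ?t))
    = (\<Sum>l<n. ee n (int l * (?t + 1)) + ee n (int l * (?t - 1)) - 2 * ee n (int l * ?t))"
    by (rule sum.cong, simp, simp add: Dhat_ee[OF n0] ee_add[symmetric] algebra_simps)
  also have "\<dots> = (\<Sum>l<n. ee n (int l * (?t + 1))) + (\<Sum>l<n. ee n (int l * (?t - 1))) - 2 * (\<Sum>l<n. ee n (int l * ?t))"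
    by (simp add: sum.distrib sum_subtractf sum_distrib_left)
  also have "\<dots> = of_nat n * complex_of_real (circD2 n $$ (i,j))"
  proof -
    have e: "circD2 n $$ (i,j) = (if j = (i + 1) mod n then 1 else 0) + (if i = (j + 1) mod n then 1 else 0)
      - (if i = j then 2 else 0)" using i j unfolding circD2_def by simp
    show ?thesis unfolding ee_orth[OF n0] e dvd_succ[OF i j] dvd_pred[OF i j] dvd_diff_small[OF j i]
      by (simp split: if_splits)
  qed
  finally show "map_mat complex_of_real (circD2 n) $$ (i,j) = Cc n (\<lambda>k. complex_of_real (Dhat n k)) $$ (i,j)"
    using i j n0 by (simp add: Cc_def)
qed (auto simp: circD2_def)

definition hf :: "complex vec \<Rightarrow> complex vec \<Rightarrow> complex" where
  "hf v w = (\<Sum>i<dim_vec w. cnj (v $ i) * w $ i)"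

definition adj :: "complex mat \<Rightarrow> complex mat" where
  "adj M = transpose_mat (map_mat cnj M)"

lemma mult_mat_vec_entry: "M \<in> carrier_mat k m \<Longrightarrow> w \<in> carrier_vec m \<Longrightarrow> i < k \<Longrightarrow>
  (M *\<^sub>v w) $ i = (\<Sum>j<m. M $$ (i,j) * w $ j)"
  by (auto simp: scalar_prod_def lessThan_atLeast0)

lemma hf_adj: assumes M: "M \<in> carrier_mat k m" and v: "v \<in> carrier_vec k" and w: "w \<in> carrier_vec m"
  shows "hf v (M *\<^sub>v w) = hf (adj M *\<^sub>v v) w"
proof -
  have adjc: "adj M \<in> carrier_mat m k" using M unfolding adj_def by auto
  have "hf v (M *\<^sub>v w) = (\<Sum>i<k. cnj (v $ i) * (\<Sum>j<m. M $$ (i,j) * w $ j))"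
    unfolding hf_def using M w by (intro sum.cong, auto simp: scalar_prod_def lessThan_atLeast0)
  also have "\<dots> = (\<Sum>i<k. \<Sum>j<m. cnj (v $ i) * M $$ (i,j) * w $ j)"
    by (simp add: sum_distrib_left mult.assoc)
  also have "\<dots> = (\<Sum>j<m. \<Sum>i<k. cnj (v $ i) * M $$ (i,j) * w $ j)"
    by (rule sum.swap)
  also have "\<dots> = (\<Sum>j<m. cnj (\<Sum>i<k. adj M $$ (j,i) * v $ i) * w $ j)"
    using M by (intro sum.cong, auto simp: adj_def sum_distrib_right sum_distrib_left ac_simps)
  also have "\<dots> = hf (adj M *\<^sub>v v) w"
    unfolding hf_def using w adjc v by (intro sum.cong, auto simp: scalar_prod_def lessThan_atLeast0)
  finally show ?thesis .
qed

lemma adj_real: "adj (map_mat complex_of_real M) = map_mat complex_of_real (transpose_mat M)"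
  unfolding adj_def by (rule eq_matI, auto)

lemma adj_FH: "adj (FH n) = dft n"
proof (rule eq_matI)
  fix i j assume "i < dim_row (dft n)" "j < dim_col (dft n)"
  hence i: "i < n" and j: "j < n" by auto
  show "adj (FH n) $$ (i,j) = dft n $$ (i,j)"
    using i j unfolding adj_def by (simp add: FH_entry dft_entry ee_cnj mult.commute)
qed (auto simp: adj_def)

lemma hf_add_right: "dim_vec w1 = dim_vec w2 \<Longrightarrow> hf v (w1 + w2) = hf v w1 + hf v w2"
  unfolding hf_def by (simp add: sum.distrib ring_distribs)
lemma hf_add_left: "dim_vec v1 = dim_vec w \<Longrightarrow> dim_vec v2 = dim_vec w \<Longrightarrow> hf (v1 + v2) w = hf v1 w + hf v2 w"
  unfolding hf_def by (simp add: sum.distrib ring_distribs)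
lemma hf_smult_right: "hf v (c \<cdot>\<^sub>v w) = c * hf v w"
  unfolding hf_def by (simp add: sum_distrib_left ac_simps)
lemma hf_smult_left: "dim_vec v = dim_vec w \<Longrightarrow> hf (c \<cdot>\<^sub>v v) w = cnj c * hf v w"
  unfolding hf_def by (simp add: sum_distrib_left ac_simps)
lemma hf_zero_right[simp]: "hf v (0\<^sub>v m) = 0" unfolding hf_def by simp
lemma hf_zero_left[simp]: "dim_vec w = m \<Longrightarrow> hf (0\<^sub>v m) w = 0" unfolding hf_def by simp

lemma hf_self: "hf v v = complex_of_real (\<Sum>i<dim_vec v. (cmod (v $ i))^2)"
  unfolding hf_def of_real_sum by (rule sum.cong, simp, metis complex_norm_square mult.commute of_real_power)

lemma hf_self_pos: "v \<noteq> 0\<^sub>v (dim_vec v) \<Longrightarrow> (\<Sum>i<dim_vec v. (cmod (v $ i))^2) > 0"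
proof -
  assume "v \<noteq> 0\<^sub>v (dim_vec v)"
  then obtain i where i: "i < dim_vec v" "v $ i \<noteq> 0" by (auto simp: vec_eq_iff)
  have "(cmod (v $ i))^2 > 0" using i by simp
  also have "(cmod (v $ i))^2 \<le> (\<Sum>i<dim_vec v. (cmod (v $ i))^2)"
    by (rule member_le_sum, insert i, auto)
  finally show ?thesis .
qed

lemma sum_split_add: "sum f {..<(a::nat) + b} = sum f {..<a} + sum (\<lambda>i. f (a + i)) {..<b}"
  by (induct b, auto simp: add.assoc)

lemma hf_append: "dim_vec a = dim_vec c \<Longrightarrow> dim_vec b = dim_vec d \<Longrightarrow>
  hf (a @\<^sub>v b) (c @\<^sub>v d) = hf a c + hf b d"
proof -
  assume ac: "dim_vec a = dim_vec c" and bd: "dim_vec b = dim_vec d"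
  have "hf (a @\<^sub>v b) (c @\<^sub>v d) = (\<Sum>i<dim_vec c + dim_vec d. cnj ((a @\<^sub>v b) $ i) * (c @\<^sub>v d) $ i)"
    unfolding hf_def by simp
  also have "\<dots> = (\<Sum>i<dim_vec c. cnj ((a @\<^sub>v b) $ i) * (c @\<^sub>v d) $ i)
     + (\<Sum>i<dim_vec d. cnj ((a @\<^sub>v b) $ (dim_vec c + i)) * (c @\<^sub>v d) $ (dim_vec c + i))"
    by (rule sum_split_add)
  also have "\<dots> = hf a c + hf b d"
    unfolding hf_def using ac bd by (simp add: index_append_vec)
  finally show ?thesis .
qed

lemma mat_diag_mult_vec: "v \<in> carrier_vec n \<Longrightarrow> i < n \<Longrightarrow> (mat_diag n f *\<^sub>v v) $ i = f i * v $ i"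
proof -
  assume v: "v \<in> carrier_vec n" and i: "i < n"
  have "(mat_diag n f *\<^sub>v v) $ i = (\<Sum>j<n. (if i = j then f j else 0) * v $ j)"
    using v i by (simp add: mat_diag_def scalar_prod_def lessThan_atLeast0)
  also have "\<dots> = (\<Sum>j\<in>{..<n}. if j = i then f i * v $ i else 0)"
    by (rule sum.cong, auto)
  also have "\<dots> = f i * v $ i" using i by simp
  finally show ?thesis .
qed

lemma mat_diag_dims[simp]: "dim_row (mat_diag n f) = n" "dim_col (mat_diag n f) = n"
  unfolding mat_diag_def by auto

lemma mv_carriers[simp]: "dft n *\<^sub>v v \<in> carrier_vec n" "FH n *\<^sub>v v \<in> carrier_vec n"
  "Cc n f *\<^sub>v v \<in> carrier_vec n" "mat_diag n f *\<^sub>v v \<in> carrier_vec n"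
  unfolding carrier_vec_def by simp_all

lemma hf_Cc: assumes n: "n > 0" and a: "a \<in> carrier_vec n" and b: "b \<in> carrier_vec n"
  shows "hf a (Cc n f *\<^sub>v b) = (\<Sum>k<n. f k * (cnj ((dft n *\<^sub>v a) $ k) * (dft n *\<^sub>v b) $ k))"
proof -
  have Fb: "dft n *\<^sub>v b \<in> carrier_vec n" using b by simp
  have "Cc n f *\<^sub>v b = FH n *\<^sub>v (mat_diag n f *\<^sub>v (dft n *\<^sub>v b))"
    unfolding Cc_fact[OF n, symmetric] using b
    by (simp add: assoc_mult_mat_vec[of _ n n _ n])
  hence "hf a (Cc n f *\<^sub>v b) = hf (dft n *\<^sub>v a) (mat_diag n f *\<^sub>v (dft n *\<^sub>v b))"
    using hf_adj[OF FH_carrier a, of "mat_diag n f *\<^sub>v (dft n *\<^sub>v b)"] Fb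
    by (simp add: adj_FH)
  also have "\<dots> = (\<Sum>k<n. cnj ((dft n *\<^sub>v a) $ k) * (f k * (dft n *\<^sub>v b) $ k))"
    unfolding hf_def
  proof (rule sum.cong)
    fix k assume "k \<in> {..<n}"
    hence k: "k < n" by simp
    show "cnj ((dft n *\<^sub>v a) $ k) * (mat_diag n f *\<^sub>v (dft n *\<^sub>v b)) $ k =
      cnj ((dft n *\<^sub>v a) $ k) * (f k * (dft n *\<^sub>v b) $ k)"
      by (simp only: mat_diag_mult_vec[OF Fb k])
  qed (use Fb in simp)
  finally show ?thesis by (simp add: ac_simps)
qed

lemma dft_inj: assumes n: "n > 0" and a: "a \<in> carrier_vec n" and z: "dft n *\<^sub>v a = 0\<^sub>v n"
  shows "a = 0\<^sub>v n"
proof -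
  have "a = FH n *\<^sub>v (dft n *\<^sub>v a)"
    using a by (simp add: assoc_mult_mat_vec[symmetric, of _ n n _ n] FH_F[OF n])
  moreover have "FH n *\<^sub>v 0\<^sub>v n = 0\<^sub>v n" by (rule eq_vecI, auto simp: scalar_prod_def)
  ultimately show ?thesis unfolding z by simp
qed

definition M4 :: "nat \<Rightarrow> (nat \<Rightarrow> real) \<Rightarrow> (nat \<Rightarrow> real) \<Rightarrow> (nat \<Rightarrow> real) \<Rightarrow> complex mat" where
  "M4 n \<alpha> \<beta> \<delta> = four_block_mat (Cc n (\<lambda>k. complex_of_real (\<alpha> k))) (Cc n (\<lambda>k. complex_of_real (\<beta> k)))
     (Cc n (\<lambda>k. complex_of_real (\<beta> k))) (Cc n (\<lambda>k. complex_of_real (\<delta> k)))"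

lemma M4_carrier[simp]: "M4 n \<alpha> \<beta> \<delta> \<in> carrier_mat (n+n) (n+n)"
  unfolding M4_def by (rule four_block_carrier_mat, auto)

definition qf :: "real \<Rightarrow> real \<Rightarrow> real \<Rightarrow> complex \<Rightarrow> complex \<Rightarrow> real" where
  "qf p q r A B = p * ((Re A)^2 + (Im A)^2) + 2 * q * (Re A * Re B + Im A * Im B) + r * ((Re B)^2 + (Im B)^2)"

lemma qf_eq: "complex_of_real p * (cnj A * A) + complex_of_real q * (cnj A * B) + complex_of_real q * (cnj B * A)
   + complex_of_real r * (cnj B * B) = complex_of_real (qf p q r A B)"
  unfolding qf_def by (simp add: complex_eq_iff algebra_simps power2_eq_square)

lemma real_qf_nonneg: assumes "p \<ge> 0" "r \<ge> 0" "p * r \<ge> q^2"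
  shows "p * a^2 + 2 * q * (a * b) + r * b^2 \<ge> (0::real)"
proof (cases "r = 0")
  case True
  hence "q^2 \<le> 0" using assms by simp
  hence "q = 0" by simp
  thus ?thesis using True assms by simp
next
  case False
  hence r: "r > 0" using assms by simp
  have "r * (p * a^2 + 2 * q * (a * b) + r * b^2) = (r * b + q * a)^2 + (p * r - q^2) * a^2"
    by (simp add: algebra_simps power2_eq_square)
  also have "\<dots> \<ge> 0" using assms by simp
  finally show ?thesis using r by (simp add: zero_le_mult_iff)
qed

lemma real_qf_pos: assumes "p > 0" "r > 0" "p * r > q^2" "a \<noteq> 0 \<or> b \<noteq> 0"
  shows "p * a^2 + 2 * q * (a * b) + r * b^2 > (0::real)"
proof -
  have "r * (p * a^2 + 2 * q * (a * b) + r * b^2) = (r * b + q * a)^2 + (p * r - q^2) * a^2"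
    by (simp add: algebra_simps power2_eq_square)
  also have "\<dots> > 0"
  proof (cases "a = 0")
    case True
    hence "b \<noteq> 0" using assms by simp
    thus ?thesis using True assms by simp
  next
    case False
    hence "(p * r - q^2) * a^2 > 0" using assms by simp
    moreover have "(r * b + q * a)^2 \<ge> 0" by simp
    ultimately show ?thesis by linarith
  qed
  finally show ?thesis using assms by (simp add: zero_less_mult_iff)
qed

lemma qf_nonneg: "p \<ge> 0 \<Longrightarrow> r \<ge> 0 \<Longrightarrow> p * r \<ge> q^2 \<Longrightarrow> qf p q r A B \<ge> 0"
  using real_qf_nonneg[of p r q "Re A" "Re B"] real_qf_nonneg[of p r q "Im A" "Im B"]
  unfolding qf_def by (simp add: algebra_simps)

lemma qf_pos: assumes "p > 0" "r > 0" "p * r > q^2" "A \<noteq> 0 \<or> B \<noteq> 0"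
  shows "qf p q r A B > 0"
proof -
  have "Re A \<noteq> 0 \<or> Re B \<noteq> 0 \<or> Im A \<noteq> 0 \<or> Im B \<noteq> 0" using assms(4) by (auto simp: complex_eq_iff)
  hence "(Re A \<noteq> 0 \<or> Re B \<noteq> 0) \<or> (Im A \<noteq> 0 \<or> Im B \<noteq> 0)" by auto
  thus ?thesis
  proof
    assume h: "Re A \<noteq> 0 \<or> Re B \<noteq> 0"
    show ?thesis using real_qf_pos[OF assms(1-3) h] real_qf_nonneg[of p r q "Im A" "Im B"] assms
      unfolding qf_def by (simp add: algebra_simps)
  next
    assume h: "Im A \<noteq> 0 \<or> Im B \<noteq> 0"
    show ?thesis using real_qf_pos[OF assms(1-3) h] real_qf_nonneg[of p r q "Re A" "Re B"] assms
      unfolding qf_def by (simp add: algebra_simps)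
  qed
qed

lemma hf_M4: assumes n: "n > 0" and a: "a \<in> carrier_vec n" and b: "b \<in> carrier_vec n"
  shows "hf (a @\<^sub>v b) (M4 n \<alpha> \<beta> \<delta> *\<^sub>v (a @\<^sub>v b)) = complex_of_real (\<Sum>k<n. qf (\<alpha> k) (\<beta> k) (\<delta> k)
     ((dft n *\<^sub>v a) $ k) ((dft n *\<^sub>v b) $ k))"
proof -
  let ?Ca = "Cc n (\<lambda>k. complex_of_real (\<alpha> k))" and ?Cb = "Cc n (\<lambda>k. complex_of_real (\<beta> k))"
    and ?Cd = "Cc n (\<lambda>k. complex_of_real (\<delta> k))"
  have "M4 n \<alpha> \<beta> \<delta> *\<^sub>v (a @\<^sub>v b) = (?Ca *\<^sub>v a + ?Cb *\<^sub>v b) @\<^sub>v (?Cb *\<^sub>v a + ?Cd *\<^sub>v b)"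
    unfolding M4_def by (rule four_block_mat_mult_vec, insert a b, auto)
  hence "hf (a @\<^sub>v b) (M4 n \<alpha> \<beta> \<delta> *\<^sub>v (a @\<^sub>v b)) = hf a (?Ca *\<^sub>v a + ?Cb *\<^sub>v b) + hf b (?Cb *\<^sub>v a + ?Cd *\<^sub>v b)"
    using a b by (simp add: hf_append)
  also have "\<dots> = hf a (?Ca *\<^sub>v a) + hf a (?Cb *\<^sub>v b) + (hf b (?Cb *\<^sub>v a) + hf b (?Cd *\<^sub>v b))"
    by (simp add: hf_add_right)
  also have "\<dots> = (\<Sum>k<n. complex_of_real (qf (\<alpha> k) (\<beta> k) (\<delta> k)
     ((dft n *\<^sub>v a) $ k) ((dft n *\<^sub>v b) $ k)))"
    unfolding hf_Cc[OF n a a] hf_Cc[OF n a b] hf_Cc[OF n b a] hf_Cc[OF n b b] qf_eq[symmetric]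
    by (simp only: sum.distrib add.assoc)
  finally show ?thesis by simp
qed

lemma split_vec: assumes v: "v \<in> carrier_vec (n+n)"
  obtains a b where "a \<in> carrier_vec n" "b \<in> carrier_vec n" "v = a @\<^sub>v b"
proof -
  have "vec_first v n \<in> carrier_vec n" "vec_last v n \<in> carrier_vec n" by auto
  from that[OF this vec_first_last_append[OF v, symmetric]] show ?thesis .
qed

lemma hf_M4_nonneg: assumes n: "n > 0" and v: "v \<in> carrier_vec (n+n)"
  and c: "\<And>k. k < n \<Longrightarrow> \<alpha> k \<ge> 0 \<and> \<delta> k \<ge> 0 \<and> \<alpha> k * \<delta> k \<ge> (\<beta> k)^2"
  shows "\<exists>r. hf v (M4 n \<alpha> \<beta> \<delta> *\<^sub>v v) = complex_of_real r \<and> r \<ge> 0"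
proof -
  obtain a b where a: "a \<in> carrier_vec n" and b: "b \<in> carrier_vec n" and vab: "v = a @\<^sub>v b"
    using split_vec[OF v] .
  let ?g = "\<lambda>k. qf (\<alpha> k) (\<beta> k) (\<delta> k) ((dft n *\<^sub>v a) $ k) ((dft n *\<^sub>v b) $ k)"
  have nn: "0 \<le> ?g x" if x: "x < n" for x using c[OF x] by (intro qf_nonneg) auto
  show ?thesis unfolding vab hf_M4[OF n a b]
    by (intro exI conjI, rule refl, rule sum_nonneg, insert nn, auto)
qed

lemma hf_M4_pos: assumes n: "n > 0" and v: "v \<in> carrier_vec (n+n)" and v0: "v \<noteq> 0\<^sub>v (n+n)"
  and c: "\<And>k. k < n \<Longrightarrow> \<alpha> k > 0 \<and> \<delta> k > 0 \<and> \<alpha> k * \<delta> k > (\<beta> k)^2"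
  shows "\<exists>r. hf v (M4 n \<alpha> \<beta> \<delta> *\<^sub>v v) = complex_of_real r \<and> r > 0"
proof -
  obtain a b where a: "a \<in> carrier_vec n" and b: "b \<in> carrier_vec n" and vab: "v = a @\<^sub>v b"
    using split_vec[OF v] .
  have "a \<noteq> 0\<^sub>v n \<or> b \<noteq> 0\<^sub>v n"
  proof (rule ccontr)
    assume "\<not> ?thesis"
    hence "v = 0\<^sub>v n @\<^sub>v 0\<^sub>v n" using vab by simp
    also have "\<dots> = 0\<^sub>v (n+n)" by (rule eq_vecI, auto)
    finally show False using v0 by simp
  qed
  hence "dft n *\<^sub>v a \<noteq> 0\<^sub>v n \<or> dft n *\<^sub>v b \<noteq> 0\<^sub>v n" using dft_inj[OF n] a b by auto
  then obtain k where k: "k < n" and nz: "(dft n *\<^sub>v a) $ k \<noteq> 0 \<or> (dft n *\<^sub>v b) $ k \<noteq> 0"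
    by (auto simp: vec_eq_iff)
  let ?g = "\<lambda>k. qf (\<alpha> k) (\<beta> k) (\<delta> k) ((dft n *\<^sub>v a) $ k) ((dft n *\<^sub>v b) $ k)"
  have nn: "0 \<le> ?g x" if x: "x < n" for x using c[OF x] by (intro qf_nonneg) auto
  have "0 < ?g k" using c[OF k] nz by (intro qf_pos, auto)
  also have "?g k \<le> (\<Sum>k<n. ?g k)"
    by (rule member_le_sum, insert k nn, auto)
  finally have pos: "0 < (\<Sum>k<n. ?g k)" .
  show ?thesis unfolding vab hf_M4[OF n a b] by (rule exI[of _ "\<Sum>k<n. ?g k"], rule conjI[OF refl pos])
qed

lemma ric_diff:
  fixes P P0 A At G Q :: "complex mat"
  assumes c: "P \<in> carrier_mat m m" "P0 \<in> carrier_mat m m" "A \<in> carrier_mat m m"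
    "At \<in> carrier_mat m m" "G \<in> carrier_mat m m" "Q \<in> carrier_mat m m"
  and R1: "P * A + At * P - P * G * P + Q = 0\<^sub>m m m"
  and R0: "P0 * A + At * P0 - P0 * G * P0 + Q = 0\<^sub>m m m"
  shows "(P - P0) * (A - G * P0) + (At - P * G) * (P - P0) = 0\<^sub>m m m"
proof -
  have GP0: "G * P0 \<in> carrier_mat m m" and PG: "P * G \<in> carrier_mat m m" using c by auto
  have as1: "P * (G * P0) = P * G * P0" "P0 * (G * P0) = P0 * G * P0"
    using c by (auto simp: assoc_mult_mat[of _ m m _ m _ m])
  have PP0: "P - P0 \<in> carrier_mat m m" using c by auto
  have e1: "(P - P0) * (A - G * P0) = (P * A - P0 * A) - ((P * G) * P0 - (P0 * G) * P0)"
    unfolding as1[symmetric] mult_minus_distrib_mat[OF PP0 c(3) GP0]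
      minus_mult_distrib_mat[OF c(1,2,3)] minus_mult_distrib_mat[OF c(1,2) GP0] ..
  have AtPG: "At - P * G \<in> carrier_mat m m" using c by auto
  have e2: "(At - P * G) * (P - P0) = (At * P - (P * G) * P) - (At * P0 - (P * G) * P0)"
    unfolding mult_minus_distrib_mat[OF AtPG c(1,2)]
      minus_mult_distrib_mat[OF c(4) PG c(1)] minus_mult_distrib_mat[OF c(4) PG c(2)] ..
  show ?thesis unfolding e1 e2
  proof (rule eq_matI)
    fix i j assume "i < dim_row (0\<^sub>m m m :: complex mat)" "j < dim_col (0\<^sub>m m m :: complex mat)"
    hence i: "i < m" and j: "j < m" by auto
    have h1: "(P * A) $$ (i,j) + (At * P) $$ (i,j) - (P * G * P) $$ (i,j) + Q $$ (i,j) = 0"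
      using arg_cong[OF R1, of "\<lambda>M. M $$ (i,j)"] c i j by simp
    have h0: "(P0 * A) $$ (i,j) + (At * P0) $$ (i,j) - (P0 * G * P0) $$ (i,j) + Q $$ (i,j) = 0"
      using arg_cong[OF R0, of "\<lambda>M. M $$ (i,j)"] c i j by simp
    have "(P * A - P0 * A - (P * G * P0 - P0 * G * P0) + (At * P - P * G * P - (At * P0 - P * G * P0))) $$ (i,j)
      = ((P * A) $$ (i,j) + (At * P) $$ (i,j) - (P * G * P) $$ (i,j) + Q $$ (i,j))
       - ((P0 * A) $$ (i,j) + (At * P0) $$ (i,j) - (P0 * G * P0) $$ (i,j) + Q $$ (i,j))"
      using c i j by simp
    also have "\<dots> = 0" unfolding h1 h0 by simp
    finally show "(P * A - P0 * A - (P * G * P0 - P0 * G * P0) + (At * P - P * G * P - (At * P0 - P * G * P0))) $$ (i,j)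
      = 0\<^sub>m m m $$ (i,j)" using i j by simp
  qed (use c in auto)
qed

lemma lyap:
  fixes P A At G Q :: "complex mat"
  assumes c: "P \<in> carrier_mat m m" "A \<in> carrier_mat m m"
    "At \<in> carrier_mat m m" "G \<in> carrier_mat m m" "Q \<in> carrier_mat m m"
  and R1: "P * A + At * P - P * G * P + Q = 0\<^sub>m m m"
  shows "(At - P * G) * P + P * (A - G * P) + (Q + P * G * P) = 0\<^sub>m m m"
proof -
  have GP: "G * P \<in> carrier_mat m m" and PG: "P * G \<in> carrier_mat m m" using c by auto
  have e1: "(At - P * G) * P = At * P - (P * G) * P"
    by (rule minus_mult_distrib_mat[OF c(3) PG c(1)])
  have as1: "P * (G * P) = P * G * P"
    using c by (auto simp: assoc_mult_mat[of _ m m _ m _ m])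
  have e2: "P * (A - G * P) = P * A - (P * G) * P"
    unfolding as1[symmetric] by (rule mult_minus_distrib_mat[OF c(1,2) GP])
  show ?thesis unfolding e1 e2
  proof (rule eq_matI)
    fix i j assume "i < dim_row (0\<^sub>m m m :: complex mat)" "j < dim_col (0\<^sub>m m m :: complex mat)"
    hence i: "i < m" and j: "j < m" by auto
    have h1: "(P * A) $$ (i,j) + (At * P) $$ (i,j) - (P * G * P) $$ (i,j) + Q $$ (i,j) = 0"
      using arg_cong[OF R1, of "\<lambda>M. M $$ (i,j)"] c i j by simp
    have "(At * P - P * G * P + (P * A - P * G * P) + (Q + P * G * P)) $$ (i,j)
      = (P * A) $$ (i,j) + (At * P) $$ (i,j) - (P * G * P) $$ (i,j) + Q $$ (i,j)"
      using c i j by simp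
    also have "\<dots> = 0" unfolding h1 by simp
    finally show "(At * P - P * G * P + (P * A - P * G * P) + (Q + P * G * P)) $$ (i,j) = 0\<^sub>m m m $$ (i,j)"
      using i j by simp
  qed (use c in auto)
qed

lemma zero_mv[simp]: "v \<in> carrier_vec m \<Longrightarrow> 0\<^sub>m k m *\<^sub>v (v :: 'a :: comm_ring vec) = 0\<^sub>v k"
  by (rule eq_vecI, auto simp: scalar_prod_def)

lemma smult_one_mv: "v \<in> carrier_vec m \<Longrightarrow> (c \<cdot>\<^sub>m 1\<^sub>m m) *\<^sub>v v = c \<cdot>\<^sub>v (v :: complex vec)"
proof (rule eq_vecI)
  fix i assume v: "v \<in> carrier_vec m" and "i < dim_vec (c \<cdot>\<^sub>v v)"
  hence i: "i < m" by simp
  have "((c \<cdot>\<^sub>m 1\<^sub>m m) *\<^sub>v v) $ i = (\<Sum>j = 0..<m. c * (if j = i then 1 else 0) * v $ j)"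
    using v i by (simp add: scalar_prod_def)
  also have "\<dots> = (\<Sum>j\<in>{0..<m}. if j = i then c * v $ i else 0)"
    by (rule sum.cong, auto)
  also have "\<dots> = (c \<cdot>\<^sub>v v) $ i" using i v by simp
  finally show "((c \<cdot>\<^sub>m 1\<^sub>m m) *\<^sub>v v) $ i = (c \<cdot>\<^sub>v v) $ i" .
qed auto

lemma shift_mv: assumes M: "M \<in> carrier_mat m m" and v: "v \<in> carrier_vec m"
  shows "(M - c \<cdot>\<^sub>m 1\<^sub>m m) *\<^sub>v v = M *\<^sub>v v - c \<cdot>\<^sub>v (v :: complex vec)"
proof -
  have "(M - c \<cdot>\<^sub>m 1\<^sub>m m) *\<^sub>v v = M *\<^sub>v v - (c \<cdot>\<^sub>m 1\<^sub>m m) *\<^sub>v v"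
    by (rule minus_mult_distrib_mat_vec[OF M _ v], auto)
  thus ?thesis using smult_one_mv[OF v] by simp
qed

lemma transpose_shift: "M \<in> carrier_mat m m \<Longrightarrow> transpose_mat (M - c \<cdot>\<^sub>m 1\<^sub>m m) = transpose_mat M - c \<cdot>\<^sub>m 1\<^sub>m m"
  by (rule eq_matI, auto)

lemma eig_transpose: assumes M: "M \<in> carrier_mat m m" and u: "u \<in> carrier_vec m" and u0: "u \<noteq> 0\<^sub>v m"
  and e: "transpose_mat M *\<^sub>v u = \<mu> \<cdot>\<^sub>v (u :: complex vec)"
  shows "\<exists>v. v \<in> carrier_vec m \<and> v \<noteq> 0\<^sub>v m \<and> M *\<^sub>v v = \<mu> \<cdot>\<^sub>v v"
proof -
  let ?N = "M - \<mu> \<cdot>\<^sub>m 1\<^sub>m m"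
  have N: "?N \<in> carrier_mat m m" using M by auto
  have NT: "transpose_mat ?N \<in> carrier_mat m m" using M by auto
  have "transpose_mat ?N *\<^sub>v u = 0\<^sub>v m"
    unfolding transpose_shift[OF M] using shift_mv[OF _ u, of "transpose_mat M" \<mu>] M u e
    by auto
  hence "det (transpose_mat ?N) = 0" using det_0_iff_vec_prod_zero[OF NT] u u0 by auto
  hence "det ?N = 0" using det_transpose[OF N] by simp
  then obtain v where v: "v \<in> carrier_vec m" "v \<noteq> 0\<^sub>v m" "?N *\<^sub>v v = 0\<^sub>v m"
    using det_0_iff_vec_prod_zero[OF N] by auto
  have "M *\<^sub>v v - \<mu> \<cdot>\<^sub>v v = 0\<^sub>v m" using v shift_mv[OF M v(1)] by simp
  hence "M *\<^sub>v v = \<mu> \<cdot>\<^sub>v v"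
    by (metis M carrier_vecD minus_cancel_vec mult_mat_vec_carrier smult_carrier_vec v(1) vec_eq_iff index_minus_vec(1) index_zero_vec(1) right_minus_eq)
  thus ?thesis using v by blast
qed

lemma hurwitz:
  fixes Acr P :: "real mat" and Qt :: "complex mat"
  defines "Acc \<equiv> map_mat complex_of_real Acr" and "Pc \<equiv> map_mat complex_of_real P"
  assumes Ac: "Acr \<in> carrier_mat m m" and Pm: "P \<in> carrier_mat m m" and Ps: "transpose_mat P = P"
  and Qm: "Qt \<in> carrier_mat m m"
  and Ppos: "\<And>v. v \<in> carrier_vec m \<Longrightarrow> v \<noteq> 0\<^sub>v m \<Longrightarrow> \<exists>r>0. hf v (Pc *\<^sub>v v) = complex_of_real r"
  and Qpos: "\<And>v. v \<in> carrier_vec m \<Longrightarrow> v \<noteq> 0\<^sub>v m \<Longrightarrow> \<exists>r>0. hf v (Qt *\<^sub>v v) = complex_of_real r"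
  and Ly: "transpose_mat Acc * Pc + Pc * Acc + Qt = 0\<^sub>m m m"
  and v: "v \<in> carrier_vec m" and v0: "v \<noteq> 0\<^sub>v m" and e: "Acc *\<^sub>v v = \<mu> \<cdot>\<^sub>v v"
  shows "Re \<mu> < 0"
proof -
  have Acm: "Acc \<in> carrier_mat m m" and Pcm: "Pc \<in> carrier_mat m m" and AT: "transpose_mat Acc \<in> carrier_mat m m"
    using Ac Pm unfolding Acc_def Pc_def by auto
  obtain p where p: "p > 0" "hf v (Pc *\<^sub>v v) = complex_of_real p" using Ppos[OF v v0] by auto
  obtain q where q: "q > 0" "hf v (Qt *\<^sub>v v) = complex_of_real q" using Qpos[OF v v0] by auto
  have Pv: "Pc *\<^sub>v v \<in> carrier_vec m" using Pcm v by auto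
  have adjAT: "adj (transpose_mat Acc) = Acc"
    unfolding Acc_def map_mat_transpose adj_real by simp
  have adjP: "adj Pc = Pc" unfolding Pc_def adj_real Ps ..
  have t1: "hf v (transpose_mat Acc *\<^sub>v (Pc *\<^sub>v v)) = cnj \<mu> * complex_of_real p"
  proof -
    have "hf v (transpose_mat Acc *\<^sub>v (Pc *\<^sub>v v)) = hf (Acc *\<^sub>v v) (Pc *\<^sub>v v)"
      using hf_adj[OF AT v Pv] adjAT by simp
    also have "\<dots> = cnj \<mu> * hf v (Pc *\<^sub>v v)" unfolding e by (rule hf_smult_left) (use v Pcm in auto)
    finally show ?thesis using p by simp
  qed
  have t2: "hf v (Pc *\<^sub>v (Acc *\<^sub>v v)) = \<mu> * complex_of_real p"
  proof -
    have "Pc *\<^sub>v (Acc *\<^sub>v v) = \<mu> \<cdot>\<^sub>v (Pc *\<^sub>v v)" unfolding e using Pcm v by (simp add: mult_mat_vec)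
    thus ?thesis using p by (simp add: hf_smult_right)
  qed
  have "0\<^sub>v m = (transpose_mat Acc * Pc + Pc * Acc + Qt) *\<^sub>v v" unfolding Ly using v by simp
  also have "\<dots> = transpose_mat Acc *\<^sub>v (Pc *\<^sub>v v) + Pc *\<^sub>v (Acc *\<^sub>v v) + Qt *\<^sub>v v"
    using AT Pcm Acm Qm v
    by (simp add: add_mult_distrib_mat_vec[of _ m m] assoc_mult_mat_vec[of _ m m _ m])
  finally have z: "transpose_mat Acc *\<^sub>v (Pc *\<^sub>v v) + Pc *\<^sub>v (Acc *\<^sub>v v) + Qt *\<^sub>v v = 0\<^sub>v m" by simp
  have "0 = hf v (transpose_mat Acc *\<^sub>v (Pc *\<^sub>v v) + Pc *\<^sub>v (Acc *\<^sub>v v) + Qt *\<^sub>v v)"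
    unfolding z by simp
  also have "\<dots> = hf v (transpose_mat Acc *\<^sub>v (Pc *\<^sub>v v)) + hf v (Pc *\<^sub>v (Acc *\<^sub>v v)) + hf v (Qt *\<^sub>v v)"
    using AT Pcm Acm Qm v by (simp add: hf_add_right)
  also have "\<dots> = complex_of_real (2 * Re \<mu> * p + q)"
    unfolding t1 t2 q(2) by (simp add: complex_eq_iff)
  finally have "2 * Re \<mu> * p + q = 0" by (metis of_real_eq_0_iff)
  hence "Re \<mu> * p < 0" using q(1) by linarith
  thus ?thesis using p(1) by (simp add: mult_less_0_iff)
qed

lemma roots2: assumes z: "z > 0" and y: "y > 0"
  shows "\<exists>r1 r2. r1 + r2 = complex_of_real z \<and> r1 * r2 = complex_of_real y \<and> Re r1 > 0 \<and> Re r2 > 0"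
proof -
  define c where "c = z^2 - 4 * y"
  define w where "w = csqrt (complex_of_real c)"
  have w2: "w^2 = complex_of_real c" unfolding w_def by simp
  have re: "(Re w)^2 - (Im w)^2 = c" using arg_cong[OF w2, of Re] by (simp add: Re_power2)
  have im: "2 * Re w * Im w = 0" using arg_cong[OF w2, of Im] by (simp add: Im_power2)
  have aw: "\<bar>Re w\<bar> < z"
  proof (cases "Re w = 0")
    case True thus ?thesis using z by simp
  next
    case False
    hence "Im w = 0" using im by simp
    hence "(Re w)^2 = c" using re by simp
    hence "\<bar>Re w\<bar>^2 < z^2" unfolding c_def using y by simp
    thus ?thesis using power2_less_imp_less z by fastforce
  qed
  let ?r1 = "(complex_of_real z + w) / 2" and ?r2 = "(complex_of_real z - w) / 2"
  have "?r1 + ?r2 = complex_of_real z" by (simp add: field_simps)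
  moreover have "?r1 * ?r2 = complex_of_real y"
  proof -
    have "?r1 * ?r2 = (complex_of_real z ^ 2 - w^2) / 4" by (simp add: field_simps power2_eq_square)
    also have "\<dots> = complex_of_real y" unfolding w2 c_def by (simp add: field_simps)
    finally show ?thesis .
  qed
  moreover have "Re ?r1 > 0" "Re ?r2 > 0" using aw by auto
  ultimately show ?thesis by blast
qed

lemma quad_kill:
  fixes T :: "complex mat"
  assumes T: "T \<in> carrier_mat m m"
  and stab: "\<And>w \<rho>. w \<in> carrier_vec m \<Longrightarrow> w \<noteq> 0\<^sub>v m \<Longrightarrow> T *\<^sub>v w = \<rho> \<cdot>\<^sub>v w \<Longrightarrow> Re \<rho> < 0"
  and z: "z > 0" and y: "y > 0" and u: "u \<in> carrier_vec m"
  and H: "T *\<^sub>v (T *\<^sub>v u) - complex_of_real z \<cdot>\<^sub>v (T *\<^sub>v u) + complex_of_real y \<cdot>\<^sub>v u = 0\<^sub>v m"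
  shows "u = 0\<^sub>v m"
proof -
  obtain r1 r2 where r: "r1 + r2 = complex_of_real z" "r1 * r2 = complex_of_real y" "Re r1 > 0" "Re r2 > 0"
    using roots2[OF z y] by blast
  define Tu where "Tu = T *\<^sub>v u"
  have Tu: "Tu \<in> carrier_vec m" unfolding Tu_def using T u by auto
  have TTu: "T *\<^sub>v Tu \<in> carrier_vec m" using T Tu by auto
  define u' where "u' = Tu - r2 \<cdot>\<^sub>v u"
  have u': "u' \<in> carrier_vec m" unfolding u'_def using Tu u by auto
  have Hi: "(T *\<^sub>v Tu) $ i = complex_of_real z * Tu $ i - complex_of_real y * u $ i" if i: "i < m" for i
  proof -
    have "(T *\<^sub>v Tu - complex_of_real z \<cdot>\<^sub>v Tu + complex_of_real y \<cdot>\<^sub>v u) $ i = 0"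
      using arg_cong[OF H, of "\<lambda>v. v $ i"] i unfolding Tu_def by simp
    thus ?thesis using i Tu TTu u by (simp add: algebra_simps)
  qed
  have Tu': "T *\<^sub>v u' = T *\<^sub>v Tu - r2 \<cdot>\<^sub>v Tu"
    unfolding u'_def Tu_def
    by (subst mult_minus_distrib_mat_vec[OF T], insert T u, auto simp: mult_mat_vec)
  have e1: "T *\<^sub>v u' = r1 \<cdot>\<^sub>v u'"
  proof (rule eq_vecI)
    fix i assume "i < dim_vec (r1 \<cdot>\<^sub>v u')"
    hence i: "i < m" using u' by simp
    have "(T *\<^sub>v u') $ i = (T *\<^sub>v Tu) $ i - r2 * Tu $ i" unfolding Tu' using i TTu Tu by simp
    also have "\<dots> = (r1 + r2) * Tu $ i - (r1 * r2) * u $ i - r2 * Tu $ i" unfolding Hi[OF i] r(1,2) ..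
    also have "\<dots> = (r1 \<cdot>\<^sub>v u') $ i" unfolding u'_def using i Tu u by (simp add: algebra_simps)
    finally show "(T *\<^sub>v u') $ i = (r1 \<cdot>\<^sub>v u') $ i" .
  qed (use T u' in auto)
  have "u' = 0\<^sub>v m"
  proof (rule ccontr)
    assume "u' \<noteq> 0\<^sub>v m"
    from stab[OF u' this e1] r(3) show False by simp
  qed
  hence e2: "T *\<^sub>v u = r2 \<cdot>\<^sub>v u"
  proof -
    assume "u' = 0\<^sub>v m"
    show ?thesis
    proof (rule eq_vecI)
      fix i assume "i < dim_vec (r2 \<cdot>\<^sub>v u)"
      hence i: "i < m" using u by simp
      have "u' $ i = 0" using \<open>u' = 0\<^sub>v m\<close> i by simp
      thus "(T *\<^sub>v u) $ i = (r2 \<cdot>\<^sub>v u) $ i" unfolding u'_def Tu_def using i T u by simp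
    qed (use T u in auto)
  qed
  show ?thesis
  proof (rule ccontr)
    assume "u \<noteq> 0\<^sub>v m"
    from stab[OF u this e2] r(4) show False by simp
  qed
qed

definition R4 :: "nat \<Rightarrow> (nat \<Rightarrow> real) \<Rightarrow> (nat \<Rightarrow> real) \<Rightarrow> (nat \<Rightarrow> real) \<Rightarrow> (nat \<Rightarrow> real) \<Rightarrow> complex mat" where
  "R4 n a b c d = four_block_mat (Cc n (\<lambda>k. complex_of_real (a k))) (Cc n (\<lambda>k. complex_of_real (b k)))
     (Cc n (\<lambda>k. complex_of_real (c k))) (Cc n (\<lambda>k. complex_of_real (d k)))"

lemma R4_carrier[simp]: "R4 n a b c d \<in> carrier_mat (n+n) (n+n)"
  unfolding R4_def by (rule four_block_carrier_mat, auto)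

lemma M4_R4: "M4 n a b d = R4 n a b b d" unfolding M4_def R4_def ..

lemma Cc_real_mult: "n > 0 \<Longrightarrow> Cc n (\<lambda>k. complex_of_real (f k)) * Cc n (\<lambda>k. complex_of_real (g k))
  = Cc n (\<lambda>k. complex_of_real (f k * g k))"
  by (simp add: Cc_mult)

lemma Cc_real_add: "Cc n (\<lambda>k. complex_of_real (f k)) + Cc n (\<lambda>k. complex_of_real (g k))
  = Cc n (\<lambda>k. complex_of_real (f k + g k))"
  by (simp add: Cc_add)

lemma Cc_real_minus: "Cc n (\<lambda>k. complex_of_real (f k)) - Cc n (\<lambda>k. complex_of_real (g k))
  = Cc n (\<lambda>k. complex_of_real (f k - g k))"
  by (simp add: Cc_minus)

lemma R4_mult: assumes n: "n > 0"
  shows "R4 n a1 b1 c1 d1 * R4 n a2 b2 c2 d2 = R4 n (\<lambda>k. a1 k * a2 k + b1 k * c2 k) (\<lambda>k. a1 k * b2 k + b1 k * d2 k)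
    (\<lambda>k. c1 k * a2 k + d1 k * c2 k) (\<lambda>k. c1 k * b2 k + d1 k * d2 k)"
  unfolding R4_def
  by (subst mult_four_block_mat[OF Cc_carrier Cc_carrier Cc_carrier Cc_carrier Cc_carrier Cc_carrier Cc_carrier Cc_carrier], auto simp: Cc_mult[OF n] Cc_add)

lemma R4_add: "R4 n a1 b1 c1 d1 + R4 n a2 b2 c2 d2 = R4 n (\<lambda>k. a1 k + a2 k) (\<lambda>k. b1 k + b2 k)
    (\<lambda>k. c1 k + c2 k) (\<lambda>k. d1 k + d2 k)"
  unfolding R4_def
  by (subst add_four_block_mat[OF Cc_carrier Cc_carrier Cc_carrier Cc_carrier Cc_carrier Cc_carrier Cc_carrier Cc_carrier], auto simp: Cc_real_add)

lemma R4_minus: "R4 n a1 b1 c1 d1 - R4 n a2 b2 c2 d2 = R4 n (\<lambda>k. a1 k - a2 k) (\<lambda>k. b1 k - b2 k)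
    (\<lambda>k. c1 k - c2 k) (\<lambda>k. d1 k - d2 k)"
proof -
  have "R4 n a1 b1 c1 d1 - R4 n a2 b2 c2 d2 = R4 n a1 b1 c1 d1 + R4 n (\<lambda>k. - a2 k) (\<lambda>k. - b2 k) (\<lambda>k. - c2 k) (\<lambda>k. - d2 k)"
    by (rule eq_matI, auto simp: R4_def Cc_def sum_negf)
  thus ?thesis unfolding R4_add by simp
qed

lemma R4_zero: "R4 n (\<lambda>k. 0) (\<lambda>k. 0) (\<lambda>k. 0) (\<lambda>k. 0) = 0\<^sub>m (n+n) (n+n)"
  unfolding R4_def by (rule eq_matI, auto simp: Cc_def)

lemma R4_eqI: "(\<And>k. k < n \<Longrightarrow> a k = a' k) \<Longrightarrow> (\<And>k. k < n \<Longrightarrow> b k = b' k) \<Longrightarrow>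
  (\<And>k. k < n \<Longrightarrow> c k = c' k) \<Longrightarrow> (\<And>k. k < n \<Longrightarrow> d k = d' k) \<Longrightarrow> R4 n a b c d = R4 n a' b' c' d'"
  unfolding R4_def Cc_def by (intro arg_cong4[where f = four_block_mat] eq_matI, auto intro!: sum.cong)

lemma pad_mat: "A \<in> carrier_mat nr nc \<Longrightarrow> four_block_mat A (0\<^sub>m nr 0) (0\<^sub>m 0 nc) (0\<^sub>m 0 0) = A"
  by (rule eq_matI, auto)

lemma Rinv_eq: assumes p: "Pi3 \<noteq> 0" shows "Rinv n Pi3 = Pi3^2 \<cdot>\<^sub>m 1\<^sub>m n"
proof -
  let ?W = "weightR n Pi3" and ?B = "Pi3^2 \<cdot>\<^sub>m 1\<^sub>m n"
  have W: "?W \<in> carrier_mat n n" unfolding weightR_def by simp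
  have WB: "?W * ?B = 1\<^sub>m n" "?B * ?W = 1\<^sub>m n" unfolding weightR_def using p
    by (auto simp: mult_smult_distrib mult_smult_assoc_mat)
  have U: "?W \<in> Units (ring_mat TYPE(real) n undefined)"
    unfolding Units_def ring_mat_def using WB W by (auto intro!: bexI[of _ ?B])
  obtain B where B: "mat_inverse ?W = Some B"
    using mat_inverse(1)[OF W, of undefined] U by (cases "mat_inverse ?W") auto
  from mat_inverse(2)[OF W B] have "?W * B = 1\<^sub>m n" "B \<in> carrier_mat n n" by auto
  have Bc: "B \<in> carrier_mat n n" by fact
  have Bsc: "?B \<in> carrier_mat n n" by simp
  have a: "(?B * ?W) * B = ?B * (?W * B)" by (rule assoc_mult_mat[OF Bsc W Bc])
  have "B = (?B * ?W) * B" unfolding WB(2) using Bc by simp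
  also have "\<dots> = ?B" unfolding a \<open>?W * B = 1\<^sub>m n\<close> by simp
  finally have "B = ?B" .
  thus ?thesis unfolding Rinv_def using B by simp
qed

lemma sysB_carrier[simp]: "sysB n \<in> carrier_mat (n+n) n"
  unfolding sysB_def using four_block_carrier_mat[of "0\<^sub>m n n" n n "0\<^sub>m n 0" n 0] by simp

lemma sysA_carrier[simp]: "sysA n \<in> carrier_mat (n+n) (n+n)"
  unfolding sysA_def by simp

lemma weightQ_carrier[simp]: "weightQ n a b \<in> carrier_mat (n+n) (n+n)"
  unfolding weightQ_def by (rule four_block_carrier_mat, auto)

definition Gm :: "nat \<Rightarrow> real \<Rightarrow> real mat" where
  "Gm n Pi3 = sysB n * Rinv n Pi3 * transpose_mat (sysB n)"

lemma Gm_eq: assumes p: "Pi3 \<noteq> 0"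
  shows "Gm n Pi3 = four_block_mat (0\<^sub>m n n) (0\<^sub>m n n) (0\<^sub>m n n) (Pi3^2 \<cdot>\<^sub>m 1\<^sub>m n)"
proof -
  let ?R = "Pi3^2 \<cdot>\<^sub>m 1\<^sub>m n"
  have R: "?R \<in> carrier_mat n n" by simp
  have BT: "transpose_mat (sysB n) = four_block_mat (0\<^sub>m n n) (1\<^sub>m n) (0\<^sub>m 0 n) (0\<^sub>m 0 n)"
    unfolding sysB_def by (subst transpose_four_block_mat, auto)
  have "sysB n * Rinv n Pi3 = four_block_mat (0\<^sub>m n n) (0\<^sub>m n 0) (1\<^sub>m n) (0\<^sub>m n 0) *
     four_block_mat ?R (0\<^sub>m n 0) (0\<^sub>m 0 n) (0\<^sub>m 0 0)"
    unfolding Rinv_eq[OF p] pad_mat[OF R] sysB_def ..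
  also have "\<dots> = four_block_mat (0\<^sub>m n n * ?R + 0\<^sub>m n 0 * 0\<^sub>m 0 n) (0\<^sub>m n n * 0\<^sub>m n 0 + 0\<^sub>m n 0 * 0\<^sub>m 0 0)
      (1\<^sub>m n * ?R + 0\<^sub>m n 0 * 0\<^sub>m 0 n) (1\<^sub>m n * 0\<^sub>m n 0 + 0\<^sub>m n 0 * 0\<^sub>m 0 0)"
    by (rule mult_four_block_mat[OF zero_carrier_mat zero_carrier_mat one_carrier_mat zero_carrier_mat
        R zero_carrier_mat zero_carrier_mat zero_carrier_mat])
  also have "\<dots> = four_block_mat (0\<^sub>m n n) (0\<^sub>m n 0) ?R (0\<^sub>m n 0)"
    by (intro cong_four_block_mat; rule eq_matI; simp add: scalar_prod_def)
  finally have BR: "sysB n * Rinv n Pi3 = four_block_mat (0\<^sub>m n n) (0\<^sub>m n 0) ?R (0\<^sub>m n 0)" .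
  have "sysB n * Rinv n Pi3 * transpose_mat (sysB n) = four_block_mat (0\<^sub>m n n * 0\<^sub>m n n + 0\<^sub>m n 0 * 0\<^sub>m 0 n)
      (0\<^sub>m n n * 1\<^sub>m n + 0\<^sub>m n 0 * 0\<^sub>m 0 n) (?R * 0\<^sub>m n n + 0\<^sub>m n 0 * 0\<^sub>m 0 n) (?R * 1\<^sub>m n + 0\<^sub>m n 0 * 0\<^sub>m 0 n)"
    unfolding BR BT
    by (rule mult_four_block_mat[OF zero_carrier_mat zero_carrier_mat R zero_carrier_mat
        zero_carrier_mat one_carrier_mat zero_carrier_mat zero_carrier_mat])
  also have "\<dots> = four_block_mat (0\<^sub>m n n) (0\<^sub>m n n) (0\<^sub>m n n) ?R"
    by (intro cong_four_block_mat; rule eq_matI; simp add: scalar_prod_def)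
  finally show ?thesis unfolding Gm_def .
qed

abbreviation cm :: "real mat \<Rightarrow> complex mat" where "cm \<equiv> map_mat complex_of_real"

lemma cm_zero[simp]: "cm (0\<^sub>m a b) = 0\<^sub>m a b" by (rule eq_matI, auto)
lemma cm_one[simp]: "cm (1\<^sub>m a) = 1\<^sub>m a" by (rule eq_matI, auto)
lemma cm_smult: "cm (c \<cdot>\<^sub>m A) = complex_of_real c \<cdot>\<^sub>m cm A" by (rule eq_matI, auto)
lemma cm_minus: "A \<in> carrier_mat a b \<Longrightarrow> B \<in> carrier_mat a b \<Longrightarrow> cm (A - B) = cm A - cm B"
  by (rule eq_matI, auto)
lemma cm_add: "A \<in> carrier_mat a b \<Longrightarrow> B \<in> carrier_mat a b \<Longrightarrow> cm (A + B) = cm A + cm B"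
  by (rule eq_matI, auto)
lemma cm_mult: "A \<in> carrier_mat a b \<Longrightarrow> B \<in> carrier_mat b c \<Longrightarrow> cm (A * B) = cm A * cm B"
  by (rule of_real_hom.mat_hom_mult)
lemma cm_transpose: "cm (transpose_mat A) = transpose_mat (cm A)" by (rule eq_matI, auto)
lemma cm_inj: "cm A = cm B \<Longrightarrow> A = B"
proof -
  assume h: "cm A = cm B"
  have d: "dim_row A = dim_row B" "dim_col A = dim_col B"
    using arg_cong[OF h, of dim_row] arg_cong[OF h, of dim_col] by auto
  show "A = B"
  proof (rule eq_matI)
    fix i j assume "i < dim_row B" "j < dim_col B"
    thus "A $$ (i,j) = B $$ (i,j)" using arg_cong[OF h, of "\<lambda>M. M $$ (i,j)"] d by simp
  qed (use d in auto)
qed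

lemma Cc_r0: "Cc n (\<lambda>k. complex_of_real 0) = 0\<^sub>m n n" using Cc_zero[of n] by simp
lemma Cc_r1: "n > 0 \<Longrightarrow> Cc n (\<lambda>k. complex_of_real 1) = 1\<^sub>m n" using Cc_one[of n] by simp
lemma Cc_rc: "n > 0 \<Longrightarrow> Cc n (\<lambda>k. complex_of_real c) = complex_of_real c \<cdot>\<^sub>m 1\<^sub>m n"
  using Cc_one[of n] Cc_smult[of "complex_of_real c" n "\<lambda>k. 1"] by simp

lemma Cc_z: "Cc n (\<lambda>k. 0) = 0\<^sub>m n n" using Cc_zero[of n] by simp
lemma Cc_1: "n > 0 \<Longrightarrow> Cc n (\<lambda>k. 1) = 1\<^sub>m n" using Cc_one[of n] by simp
lemma Cc_c: "n > 0 \<Longrightarrow> Cc n (\<lambda>k. c) = c \<cdot>\<^sub>m 1\<^sub>m n"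
  using Cc_one[of n] Cc_smult[of c n "\<lambda>k. 1"] by simp

lemma circD2_sym: "transpose_mat (circD2 n) = circD2 n"
  by (rule eq_matI, auto simp: circD2_def)

lemma A_R4: assumes n: "n \<ge> 2"
  shows "cm (sysA n) = R4 n (\<lambda>k. 0) (\<lambda>k. 1) (Dhat n) (\<lambda>k. 0)"
proof -
  have n0: "n > 0" using n by simp
  show ?thesis unfolding sysA_def R4_def
    by (subst map_four_block_mat[OF zero_carrier_mat one_carrier_mat circD2_carrier zero_carrier_mat], auto simp: Cc_z Cc_1[OF n0] circD2_Cc[OF n])
qed

lemma AT_R4: assumes n: "n \<ge> 2"
  shows "cm (transpose_mat (sysA n)) = R4 n (\<lambda>k. 0) (Dhat n) (\<lambda>k. 1) (\<lambda>k. 0)"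
proof -
  have n0: "n > 0" using n by simp
  have "transpose_mat (sysA n) = four_block_mat (0\<^sub>m n n) (circD2 n) (1\<^sub>m n) (0\<^sub>m n n)"
    unfolding sysA_def by (subst transpose_four_block_mat, auto simp: circD2_sym)
  thus ?thesis unfolding R4_def
    by (simp, subst map_four_block_mat[OF zero_carrier_mat circD2_carrier one_carrier_mat zero_carrier_mat], auto simp: Cc_z Cc_1[OF n0] circD2_Cc[OF n])
qed

lemma G_R4: assumes n: "n > 0" and p: "Pi3 \<noteq> 0"
  shows "cm (Gm n Pi3) = R4 n (\<lambda>k. 0) (\<lambda>k. 0) (\<lambda>k. 0) (\<lambda>k. Pi3^2)"
  unfolding Gm_eq[OF p] R4_def
  by (subst map_four_block_mat[OF zero_carrier_mat zero_carrier_mat zero_carrier_mat smult_carrier_mat[OF one_carrier_mat]], auto simp: Cc_z Cc_c[OF n] cm_smult)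

lemma Q_R4: assumes n: "n \<ge> 2"
  shows "cm (weightQ n a b) = R4 n (\<lambda>k. 1 - a * Dhat n k) (\<lambda>k. 0) (\<lambda>k. 0) (\<lambda>k. b)"
proof -
  have n0: "n > 0" using n by simp
  have "cm (1\<^sub>m n - a \<cdot>\<^sub>m circD2 n) = Cc n (\<lambda>k. complex_of_real (1 - a * Dhat n k))"
    by (subst cm_minus[of _ n n], auto simp: cm_smult circD2_Cc[OF n] Cc_one[OF n0] Cc_smult Cc_minus)
  moreover have "1\<^sub>m n - a \<cdot>\<^sub>m circD2 n \<in> carrier_mat n n" by auto
  ultimately show ?thesis unfolding weightQ_def R4_def
    by (subst map_four_block_mat[OF _ zero_carrier_mat zero_carrier_mat smult_carrier_mat[OF one_carrier_mat]], auto simp: Cc_z Cc_c[OF n0] cm_smult)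
qed

lemma Gm_sym: "Pi3 \<noteq> 0 \<Longrightarrow> transpose_mat (Gm n Pi3) = Gm n Pi3"
  unfolding Gm_eq by (subst transpose_four_block_mat, auto)

lemma Gm_carrier: "Pi3 \<noteq> 0 \<Longrightarrow> Gm n Pi3 \<in> carrier_mat (n+n) (n+n)"
  by (simp add: Gm_eq)

lemma ric_assoc: assumes P: "P \<in> carrier_mat (n+n) (n+n)" and p: "Pi3 \<noteq> 0"
  shows "P * sysB n * Rinv n Pi3 * transpose_mat (sysB n) * P = P * Gm n Pi3 * P"
proof -
  have R: "Rinv n Pi3 \<in> carrier_mat n n" unfolding Rinv_eq[OF p] by simp
  have BT: "transpose_mat (sysB n) \<in> carrier_mat n (n+n)" by simp
  have "P * sysB n * Rinv n Pi3 = P * (sysB n * Rinv n Pi3)"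
    by (rule assoc_mult_mat[OF P sysB_carrier R])
  moreover have "P * (sysB n * Rinv n Pi3) * transpose_mat (sysB n) = P * Gm n Pi3"
    unfolding Gm_def by (rule assoc_mult_mat[OF P mult_carrier_mat[OF sysB_carrier R] BT])
  ultimately show ?thesis by simp
qed

definition yf :: "nat \<Rightarrow> real \<Rightarrow> real \<Rightarrow> nat \<Rightarrow> real" where
  "yf n Pi1 Pi3 k = sqrt ((Dhat n k)^2 + Pi3^2 * (1 - Pi1 * Dhat n k))"

definition zf :: "nat \<Rightarrow> real \<Rightarrow> real \<Rightarrow> real \<Rightarrow> nat \<Rightarrow> real" where
  "zf n Pi1 Pi2 Pi3 k = sqrt (2 * K0hat n Pi1 Pi3 k + Pi2 * Pi3^2)"

definition P0 :: "nat \<Rightarrow> real \<Rightarrow> real \<Rightarrow> real \<Rightarrow> real mat" where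
  "P0 n Pi1 Pi2 Pi3 = four_block_mat
     (Cr n (\<lambda>k. zf n Pi1 Pi2 Pi3 k * yf n Pi1 Pi3 k / Pi3^2)) (Cr n (\<lambda>k. K0hat n Pi1 Pi3 k / Pi3^2))
     (Cr n (\<lambda>k. K0hat n Pi1 Pi3 k / Pi3^2)) (Cr n (\<lambda>k. zf n Pi1 Pi2 Pi3 k / Pi3^2))"

lemma P0_carrier[simp]: "P0 n Pi1 Pi2 Pi3 \<in> carrier_mat (n+n) (n+n)"
  unfolding P0_def by (rule four_block_carrier_mat, auto)

lemma Dhat_nonpos: "Dhat n k \<le> 0" unfolding Dhat_def by simp

lemma K0_yf: "K0hat n Pi1 Pi3 k = Dhat n k + yf n Pi1 Pi3 k"
  unfolding K0hat_def yf_def ..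

context
  fixes n :: nat and Pi1 Pi2 Pi3 :: real
  assumes p1: "Pi1 > 0" and p2: "Pi2 > 0" and p3: "Pi3 > 0"
begin

lemma q1_pos: "1 - Pi1 * Dhat n k \<ge> 1"
  using p1 Dhat_nonpos[of n k] by (simp add: mult_nonneg_nonpos)

lemma yf_sq: "(yf n Pi1 Pi3 k)^2 = (Dhat n k)^2 + Pi3^2 * (1 - Pi1 * Dhat n k)"
proof -
  have "0 \<le> Pi3^2 * (1 - Pi1 * Dhat n k)" using q1_pos[of k] by simp
  hence "0 \<le> (Dhat n k)^2 + Pi3^2 * (1 - Pi1 * Dhat n k)" by (rule add_nonneg_nonneg[OF zero_le_power2])
  thus ?thesis unfolding yf_def by (rule real_sqrt_pow2)
qed

lemma yf_gt: "yf n Pi1 Pi3 k > - Dhat n k"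
proof -
  have a: "Pi3^2 * (1 - Pi1 * Dhat n k) > 0" using q1_pos[of k] p3 by simp
  have "(- Dhat n k)^2 < (yf n Pi1 Pi3 k)^2" unfolding yf_sq using a by simp
  moreover have "0 \<le> (Dhat n k)^2 + Pi3^2 * (1 - Pi1 * Dhat n k)"
    by (rule add_nonneg_nonneg[OF zero_le_power2], use a in simp)
  hence "yf n Pi1 Pi3 k \<ge> 0" unfolding yf_def by (rule real_sqrt_ge_zero)
  ultimately show ?thesis using power2_less_imp_less by blast
qed

lemma yf_pos: "yf n Pi1 Pi3 k > 0" using yf_gt[of k] Dhat_nonpos[of n k] by linarith

lemma K0_pos: "K0hat n Pi1 Pi3 k > 0" using yf_gt[of k] unfolding K0_yf by linarith

lemma zf_sq: "(zf n Pi1 Pi2 Pi3 k)^2 = 2 * K0hat n Pi1 Pi3 k + Pi2 * Pi3^2"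
  unfolding zf_def using K0_pos[of k] p2 by simp

lemma zf_pos: "zf n Pi1 Pi2 Pi3 k > 0"
proof -
  have "0 < Pi2 * Pi3^2" using p2 p3 by simp
  thus ?thesis unfolding zf_def using K0_pos[of k] by simp
qed

end

lemma ric_scalar: fixes d y z s q Pi2 :: real
  assumes s: "s \<noteq> 0" and y: "y^2 = d^2 + s * q" and z: "z^2 = 2 * (d + y) + Pi2 * s"
  shows "(d + y) / s * d + d * ((d + y) / s) - (d + y) / s * s * ((d + y) / s) + q = 0"
    "z * y / s + d * (z / s) - (d + y) / s * s * (z / s) = 0"
    "z / s * d + z * y / s - z / s * s * ((d + y) / s) = 0"
    "(d + y) / s + (d + y) / s - z / s * s * (z / s) + Pi2 = 0"
proof -
  show "(d + y) / s * d + d * ((d + y) / s) - (d + y) / s * s * ((d + y) / s) + q = 0"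
    using s y by (simp add: field_simps power2_eq_square)
  show "z * y / s + d * (z / s) - (d + y) / s * s * (z / s) = 0"
    using s by (simp add: field_simps)
  show "z / s * d + z * y / s - z / s * s * ((d + y) / s) = 0"
    using s by (simp add: field_simps)
  show "(d + y) / s + (d + y) / s - z / s * s * (z / s) + Pi2 = 0"
    using s z by (simp add: field_simps power2_eq_square)
qed

lemma hf_real: assumes M: "M \<in> carrier_mat m m" and x: "x \<in> carrier_vec m"
  shows "hf (map_vec complex_of_real x) (cm M *\<^sub>v map_vec complex_of_real x) = complex_of_real (x \<bullet> (M *\<^sub>v x))"
proof -
  have e: "cm M *\<^sub>v map_vec complex_of_real x = map_vec complex_of_real (M *\<^sub>v x)"
    by (rule of_real_hom.mult_mat_vec_hom[OF M x, symmetric])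
  show ?thesis unfolding e hf_def using M x
    by (simp add: scalar_prod_def lessThan_atLeast0 of_real_sum)
qed

lemma cm_ric: assumes X: "X \<in> carrier_mat m m" and A: "A \<in> carrier_mat m m" and AT: "AT \<in> carrier_mat m m"
  and G: "G \<in> carrier_mat m m" and Q: "Q \<in> carrier_mat m m"
  shows "cm (X * A + AT * X - X * G * X + Q) = cm X * cm A + cm AT * cm X - cm X * cm G * cm X + cm Q"
proof -
  have c1: "X * A \<in> carrier_mat m m" "AT * X \<in> carrier_mat m m" "X * G \<in> carrier_mat m m"
    "X * G * X \<in> carrier_mat m m" using X A AT G by auto
  have c2: "X * A + AT * X \<in> carrier_mat m m" "X * A + AT * X - X * G * X \<in> carrier_mat m m"
    using add_carrier_mat[OF c1(2)] minus_carrier_mat[OF c1(4)] by auto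
  have "cm (X * A + AT * X - X * G * X + Q) = cm (X * A + AT * X - X * G * X) + cm Q"
    by (rule cm_add[OF c2(2) Q])
  also have "cm (X * A + AT * X - X * G * X) = cm (X * A + AT * X) - cm (X * G * X)"
    by (rule cm_minus[OF c2(1) c1(4)])
  also have "cm (X * A + AT * X) = cm (X * A) + cm (AT * X)" by (rule cm_add[OF c1(1,2)])
  also have "cm (X * A) = cm X * cm A" by (rule cm_mult[OF X A])
  also have "cm (AT * X) = cm AT * cm X" by (rule cm_mult[OF AT X])
  also have "cm (X * G * X) = cm (X * G) * cm X" by (rule cm_mult[OF c1(3) X])
  also have "cm (X * G) = cm X * cm G" by (rule cm_mult[OF X G])
  finally show ?thesis .
qed

lemma sym_fns: "symf n (\<lambda>k. zf n Pi1 Pi2 Pi3 k * yf n Pi1 Pi3 k / Pi3^2)"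
  "symf n (\<lambda>k. K0hat n Pi1 Pi3 k / Pi3^2)" "symf n (\<lambda>k. zf n Pi1 Pi2 Pi3 k / Pi3^2)"
  using Dhat_sym[of n] unfolding symf_def zf_def yf_def K0hat_def by auto

lemma cm_P0: "cm (P0 n Pi1 Pi2 Pi3) = M4 n (\<lambda>k. zf n Pi1 Pi2 Pi3 k * yf n Pi1 Pi3 k / Pi3^2)
   (\<lambda>k. K0hat n Pi1 Pi3 k / Pi3^2) (\<lambda>k. zf n Pi1 Pi2 Pi3 k / Pi3^2)"
  unfolding P0_def M4_def
  by (subst map_four_block_mat[OF Cr_carrier Cr_carrier Cr_carrier Cr_carrier], simp add: Cr_Cc sym_fns)

lemma P0_sym: "transpose_mat (P0 n Pi1 Pi2 Pi3) = P0 n Pi1 Pi2 Pi3"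
  unfolding P0_def by (subst transpose_four_block_mat, auto simp: Cr_transpose)

lemma P0_ric: assumes n: "n \<ge> 2" and p1: "Pi1 > 0" and p2: "Pi2 > 0" and p3: "Pi3 > 0"
  shows "P0 n Pi1 Pi2 Pi3 * sysA n + transpose_mat (sysA n) * P0 n Pi1 Pi2 Pi3
       - P0 n Pi1 Pi2 Pi3 * sysB n * Rinv n Pi3 * transpose_mat (sysB n) * P0 n Pi1 Pi2 Pi3 + weightQ n Pi1 Pi2
     = 0\<^sub>m (n+n) (n+n)"
proof -
  have n0: "n > 0" using n by simp
  have p: "Pi3 \<noteq> 0" using p3 by simp
  have s: "Pi3^2 \<noteq> 0" using p by simp
  let ?P = "P0 n Pi1 Pi2 Pi3"
  have P: "?P \<in> carrier_mat (n+n) (n+n)" by simp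
  have G: "Gm n Pi3 \<in> carrier_mat (n+n) (n+n)" using Gm_carrier[OF p] .
  have A: "sysA n \<in> carrier_mat (n+n) (n+n)" and AT: "transpose_mat (sysA n) \<in> carrier_mat (n+n) (n+n)"
    and Q: "weightQ n Pi1 Pi2 \<in> carrier_mat (n+n) (n+n)" by auto
  have "cm (?P * sysA n + transpose_mat (sysA n) * ?P - ?P * Gm n Pi3 * ?P + weightQ n Pi1 Pi2)
     = cm ?P * cm (sysA n) + cm (transpose_mat (sysA n)) * cm ?P - cm ?P * cm (Gm n Pi3) * cm ?P + cm (weightQ n Pi1 Pi2)"
    by (rule cm_ric[OF P A AT G Q])
  also have "\<dots> = 0\<^sub>m (n+n) (n+n)"
    unfolding cm_P0 A_R4[OF n] AT_R4[OF n] G_R4[OF n0 p] Q_R4[OF n] M4_R4 R4_mult[OF n0] R4_add R4_minus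
      R4_zero[symmetric]
    apply (rule R4_eqI)
    subgoal for k using ric_scalar(1)[OF s yf_sq[OF p1 p2 p3, of n k] zf_sq[OF p1 p2 p3, of n k, unfolded K0_yf]]
      by (simp add: K0_yf)
    subgoal for k using ric_scalar(2)[OF s yf_sq[OF p1 p2 p3, of n k] zf_sq[OF p1 p2 p3, of n k, unfolded K0_yf]]
      by (simp add: K0_yf)
    subgoal for k using ric_scalar(3)[OF s yf_sq[OF p1 p2 p3, of n k] zf_sq[OF p1 p2 p3, of n k, unfolded K0_yf]]
      by (simp add: K0_yf)
    subgoal for k using ric_scalar(4)[OF s yf_sq[OF p1 p2 p3, of n k] zf_sq[OF p1 p2 p3, of n k, unfolded K0_yf]]
      by (simp add: K0_yf)
    done
  finally show ?thesis unfolding ric_assoc[OF P p] using cm_inj by simp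
qed

lemma pd_scalar: fixes d y z s q Pi2 :: real
  assumes s: "s > 0" and y: "y^2 = d^2 + s * q" and z: "z^2 = 2 * (d + y) + Pi2 * s"
  and q: "q > 0" and yp: "y > 0" and zp: "z > 0" and p2: "Pi2 > 0"
  shows "z * y / s > 0" "z / s > 0" "z * y / s * (z / s) > ((d + y) / s)^2"
proof -
  show "z * y / s > 0" "z / s > 0" using s yp zp by auto
  have y': "y * y = d * d + s * q" using y by (simp add: power2_eq_square)
  have z': "z * z = 2 * (d + y) + Pi2 * s" using z by (simp add: power2_eq_square)
  have "z * z * y - (d + y) * (d + y) = (2 * (d + y) + Pi2 * s) * y - (d + y) * (d + y)" using z' by simp
  also have "\<dots> = y * y - d * d + Pi2 * s * y" by (simp add: algebra_simps)
  also have "\<dots> = s * q + Pi2 * s * y" using y' by simp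
  finally have "z^2 * y - (d + y)^2 = s * q + Pi2 * s * y" by (simp add: power2_eq_square)
  also have "\<dots> > 0" using s q p2 yp by (simp add: add_pos_pos)
  finally have "z^2 * y > (d + y)^2" by simp
  hence "z^2 * y / s^2 > (d + y)^2 / s^2" using s by (simp add: divide_strict_right_mono)
  thus "z * y / s * (z / s) > ((d + y) / s)^2" by (simp add: power2_eq_square field_simps)
qed

lemma P0_cond: assumes p1: "Pi1 > 0" and p2: "Pi2 > 0" and p3: "Pi3 > 0"
  shows "zf n Pi1 Pi2 Pi3 k * yf n Pi1 Pi3 k / Pi3^2 > 0 \<and> zf n Pi1 Pi2 Pi3 k / Pi3^2 > 0 \<and>
       zf n Pi1 Pi2 Pi3 k * yf n Pi1 Pi3 k / Pi3^2 * (zf n Pi1 Pi2 Pi3 k / Pi3^2) > (K0hat n Pi1 Pi3 k / Pi3^2)^2"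
proof -
  have sp: "Pi3^2 > 0" using p3 by simp
  note q = q1_pos[OF p1 p2 p3, of n k]
  have "1 - Pi1 * Dhat n k > 0" using q by simp
  from pd_scalar[OF sp yf_sq[OF p1 p2 p3, of n k] zf_sq[OF p1 p2 p3, of n k, unfolded K0_yf]
      this yf_pos[OF p1 p2 p3] zf_pos[OF p1 p2 p3] p2]
  show ?thesis unfolding K0_yf by auto
qed

lemma P0_spd: assumes n: "n \<ge> 2" and p1: "Pi1 > 0" and p2: "Pi2 > 0" and p3: "Pi3 > 0"
  shows "riccati_spd_solution n Pi1 Pi2 Pi3 (P0 n Pi1 Pi2 Pi3)"
proof -
  have n0: "n > 0" using n by simp
  have nn: "2 * n = n + n" by simp
  let ?P = "P0 n Pi1 Pi2 Pi3"
  have pos: "x \<bullet> (?P *\<^sub>v x) > 0" if x: "x \<in> carrier_vec (n+n)" and x0: "x \<noteq> 0\<^sub>v (n+n)" for x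
  proof -
    let ?xc = "map_vec complex_of_real x"
    have xc: "?xc \<in> carrier_vec (n+n)" using x by simp
    have xc0: "?xc \<noteq> 0\<^sub>v (n+n)"
    proof
      assume "?xc = 0\<^sub>v (n+n)"
      hence "x = 0\<^sub>v (n+n)" using x by (auto simp: vec_eq_iff)
      thus False using x0 by simp
    qed
    have sp: "Pi3^2 > 0" using p3 by simp
    have "\<exists>r. hf ?xc (cm ?P *\<^sub>v ?xc) = complex_of_real r \<and> r > 0"
      unfolding cm_P0 by (rule hf_M4_pos[OF n0 xc xc0], rule P0_cond[OF p1 p2 p3])
    then obtain r where r: "hf ?xc (cm ?P *\<^sub>v ?xc) = complex_of_real r" "r > 0" by blast
    have "complex_of_real (x \<bullet> (?P *\<^sub>v x)) = complex_of_real r"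
      using hf_real[OF P0_carrier x] r(1) by simp
    thus ?thesis using r(2) by simp
  qed
  show ?thesis unfolding riccati_spd_solution_def sym_pos_def_def nn
    using P0_ric[OF n p1 p2 p3] P0_sym pos by auto
qed

lemma hf_sym_real: assumes P: "P \<in> carrier_mat m m" and Ps: "transpose_mat P = P" and v: "v \<in> carrier_vec m"
  shows "hf v (cm P *\<^sub>v v) = complex_of_real (map_vec Re v \<bullet> (P *\<^sub>v map_vec Re v) + map_vec Im v \<bullet> (P *\<^sub>v map_vec Im v))"
proof -
  let ?a = "\<lambda>i. Re (v $ i)" and ?b = "\<lambda>i. Im (v $ i)"
  have sym: "P $$ (j,i) = P $$ (i,j)" if "i < m" "j < m" for i j
    using arg_cong[OF Ps, of "\<lambda>M. M $$ (i,j)"] that P by auto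
  have "hf v (cm P *\<^sub>v v) = (\<Sum>i<m. \<Sum>j<m. cnj (v $ i) * (complex_of_real (P $$ (i,j)) * v $ j))"
    unfolding hf_def using P v by (auto simp: scalar_prod_def lessThan_atLeast0 sum_distrib_left intro!: sum.cong)
  also have "\<dots> = (\<Sum>i<m. \<Sum>j<m. complex_of_real (P $$ (i,j) * (?a i * ?a j + ?b i * ?b j))
       + \<i> * complex_of_real (P $$ (i,j) * (?a i * ?b j - ?b i * ?a j)))"
    by (intro sum.cong refl, simp add: complex_eq_iff algebra_simps)
  also have "\<dots> = complex_of_real (\<Sum>i<m. \<Sum>j<m. P $$ (i,j) * (?a i * ?a j + ?b i * ?b j))
       + \<i> * complex_of_real (\<Sum>i<m. \<Sum>j<m. P $$ (i,j) * (?a i * ?b j - ?b i * ?a j))"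
    by (simp add: sum.distrib sum_distrib_left)
  also have "(\<Sum>i<m. \<Sum>j<m. P $$ (i,j) * (?a i * ?b j - ?b i * ?a j)) = 0"
  proof -
    have "(\<Sum>i<m. \<Sum>j<m. P $$ (i,j) * (?b i * ?a j)) = (\<Sum>j<m. \<Sum>i<m. P $$ (i,j) * (?b i * ?a j))"
      by (rule sum.swap)
    also have "\<dots> = (\<Sum>j<m. \<Sum>i<m. P $$ (j,i) * (?a j * ?b i))"
      by (intro sum.cong refl, simp add: sym mult.commute)
    finally have "(\<Sum>i<m. \<Sum>j<m. P $$ (i,j) * (?b i * ?a j)) = (\<Sum>i<m. \<Sum>j<m. P $$ (i,j) * (?a i * ?b j))" .
    thus ?thesis by (simp add: right_diff_distrib sum_subtractf)
  qed
  also have "(\<Sum>i<m. \<Sum>j<m. P $$ (i,j) * (?a i * ?a j + ?b i * ?b j))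
     = map_vec Re v \<bullet> (P *\<^sub>v map_vec Re v) + map_vec Im v \<bullet> (P *\<^sub>v map_vec Im v)"
    using P v by (simp add: scalar_prod_def lessThan_atLeast0 sum_distrib_left sum.distrib algebra_simps)
  finally show ?thesis by simp
qed

lemma hf_pd: assumes spd: "sym_pos_def m P" and v: "v \<in> carrier_vec m" and v0: "v \<noteq> 0\<^sub>v m"
  shows "\<exists>r>0. hf v (cm P *\<^sub>v v) = complex_of_real r"
proof -
  have P: "P \<in> carrier_mat m m" and Ps: "transpose_mat P = P"
    and pd: "\<And>x. x \<in> carrier_vec m \<Longrightarrow> x \<noteq> 0\<^sub>v m \<Longrightarrow> x \<bullet> (P *\<^sub>v x) > 0"
    using spd unfolding sym_pos_def_def by auto
  let ?a = "map_vec Re v" and ?b = "map_vec Im v"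
  have ac: "?a \<in> carrier_vec m" and bc: "?b \<in> carrier_vec m" using v by auto
  have nn: "x \<bullet> (P *\<^sub>v x) \<ge> 0" if x: "x \<in> carrier_vec m" for x
  proof (cases "x = 0\<^sub>v m")
    case True thus ?thesis using P by (simp add: scalar_prod_def)
  next
    case False thus ?thesis using pd[OF x] by (simp add: less_imp_le)
  qed
  have "?a \<noteq> 0\<^sub>v m \<or> ?b \<noteq> 0\<^sub>v m"
  proof (rule ccontr)
    assume "\<not> ?thesis"
    hence "v = 0\<^sub>v m" using v by (auto simp: vec_eq_iff complex_eq_iff)
    thus False using v0 by simp
  qed
  hence "?a \<bullet> (P *\<^sub>v ?a) + ?b \<bullet> (P *\<^sub>v ?b) > 0"
    using pd[OF ac] pd[OF bc] nn[OF ac] nn[OF bc] by (auto simp: add_pos_nonneg add_nonneg_pos)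
  thus ?thesis using hf_sym_real[OF P Ps v] by blast
qed

lemma Cc_eigen_smult: assumes n: "n > 0" and k: "k < n"
  shows "Cc n f *\<^sub>v (\<alpha> \<cdot>\<^sub>v fv n k) = (f k * \<alpha>) \<cdot>\<^sub>v fv n k"
proof -
  have "Cc n f *\<^sub>v (\<alpha> \<cdot>\<^sub>v fv n k) = \<alpha> \<cdot>\<^sub>v (Cc n f *\<^sub>v fv n k)"
    by (rule mult_mat_vec[OF Cc_carrier fv_carrier])
  also have "\<dots> = (f k * \<alpha>) \<cdot>\<^sub>v fv n k" unfolding Cc_eigen[OF n k] by (rule eq_vecI, auto)
  finally show ?thesis .
qed

lemma R4_mv: assumes n: "n > 0" and k: "k < n"
  shows "R4 n a b c d *\<^sub>v ((\<alpha> \<cdot>\<^sub>v fv n k) @\<^sub>v (\<beta> \<cdot>\<^sub>v fv n k))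
    = ((complex_of_real (a k) * \<alpha> + complex_of_real (b k) * \<beta>) \<cdot>\<^sub>v fv n k) @\<^sub>v
      ((complex_of_real (c k) * \<alpha> + complex_of_real (d k) * \<beta>) \<cdot>\<^sub>v fv n k)"
  unfolding R4_def
  by (subst four_block_mat_mult_vec[OF Cc_carrier Cc_carrier Cc_carrier Cc_carrier smult_carrier_vec[THEN iffD2, OF fv_carrier]
        smult_carrier_vec[THEN iffD2, OF fv_carrier]], simp add: Cc_eigen_smult[OF n k],
      intro arg_cong2[where f = append_vec] eq_vecI, auto simp: algebra_simps)

lemma mv_zero: "A \<in> carrier_mat k m \<Longrightarrow> A *\<^sub>v 0\<^sub>v m = (0\<^sub>v k :: 'a :: comm_ring vec)"
  by (rule eq_vecI, auto simp: scalar_prod_def)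

lemma kill_mode:
  fixes Dl T A0 :: "complex mat"
  assumes Dl: "Dl \<in> carrier_mat m m" and T: "T \<in> carrier_mat m m" and A0: "A0 \<in> carrier_mat m m"
  and rel: "\<And>x. x \<in> carrier_vec m \<Longrightarrow> Dl *\<^sub>v (A0 *\<^sub>v x) + T *\<^sub>v (Dl *\<^sub>v x) = 0\<^sub>v m"
  and stab: "\<And>w \<rho>. w \<in> carrier_vec m \<Longrightarrow> w \<noteq> 0\<^sub>v m \<Longrightarrow> T *\<^sub>v w = \<rho> \<cdot>\<^sub>v w \<Longrightarrow> Re \<rho> < 0"
  and z: "z > 0" and y: "y > 0" and w: "w \<in> carrier_vec m"
  and pw: "A0 *\<^sub>v (A0 *\<^sub>v w) + complex_of_real z \<cdot>\<^sub>v (A0 *\<^sub>v w) + complex_of_real y \<cdot>\<^sub>v w = 0\<^sub>v m"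
  shows "Dl *\<^sub>v w = 0\<^sub>v m"
proof -
  define w1 where "w1 = A0 *\<^sub>v w"
  define u where "u = Dl *\<^sub>v w"
  define u1 where "u1 = Dl *\<^sub>v w1"
  define u2 where "u2 = Dl *\<^sub>v (A0 *\<^sub>v w1)"
  have w1c: "w1 \<in> carrier_vec m" unfolding w1_def using A0 w by auto
  have uc: "u \<in> carrier_vec m" "u1 \<in> carrier_vec m" "u2 \<in> carrier_vec m"
    unfolding u_def u1_def u2_def using Dl A0 w w1c by auto
  have Tu: "T *\<^sub>v u = (-1) \<cdot>\<^sub>v u1"
  proof -
    have "u1 + T *\<^sub>v u = 0\<^sub>v m" using rel[OF w] unfolding u1_def u_def w1_def .
    thus ?thesis using uc T by (auto simp: vec_eq_iff algebra_simps add_eq_0_iff)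
  qed
  have Tu1: "T *\<^sub>v u1 = (-1) \<cdot>\<^sub>v u2"
  proof -
    have "u2 + T *\<^sub>v u1 = 0\<^sub>v m" using rel[OF w1c] unfolding u1_def u2_def .
    thus ?thesis using uc T by (auto simp: vec_eq_iff algebra_simps add_eq_0_iff)
  qed
  have TTu: "T *\<^sub>v (T *\<^sub>v u) = u2"
    unfolding Tu mult_mat_vec[OF T uc(2)] Tu1 using uc by (auto simp: vec_eq_iff)
  have lin: "Dl *\<^sub>v (A0 *\<^sub>v w1 + complex_of_real z \<cdot>\<^sub>v w1 + complex_of_real y \<cdot>\<^sub>v w)
     = u2 + complex_of_real z \<cdot>\<^sub>v u1 + complex_of_real y \<cdot>\<^sub>v u"
    unfolding u2_def u1_def u_def using Dl A0 w w1c
    by (simp add: mult_add_distrib_mat_vec[of _ m m] mult_mat_vec[of _ m m])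
  have z0: "u2 + complex_of_real z \<cdot>\<^sub>v u1 + complex_of_real y \<cdot>\<^sub>v u = 0\<^sub>v m"
    unfolding lin[symmetric] using pw unfolding w1_def using mv_zero[OF Dl] by simp
  have H: "T *\<^sub>v (T *\<^sub>v u) - complex_of_real z \<cdot>\<^sub>v (T *\<^sub>v u) + complex_of_real y \<cdot>\<^sub>v u = 0\<^sub>v m"
    unfolding TTu unfolding Tu using z0 uc by (auto simp: vec_eq_iff add.assoc)
  show ?thesis using quad_kill[OF T stab z y uc(1) H] unfolding u_def .
qed

lemma smult_zero_v[simp]: "c \<cdot>\<^sub>v 0\<^sub>v k = (0\<^sub>v k :: 'a :: comm_ring vec)"
  by (rule eq_vecI, auto)

lemma Dl_zero: assumes n: "n > 0" and Dl: "Dl \<in> carrier_mat (n+n) (n+n)"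
  and k1: "\<And>k. k < n \<Longrightarrow> Dl *\<^sub>v (fv n k @\<^sub>v 0\<^sub>v n) = 0\<^sub>v (n+n)"
  and k2: "\<And>k. k < n \<Longrightarrow> Dl *\<^sub>v (0\<^sub>v n @\<^sub>v fv n k) = 0\<^sub>v (n+n)"
  shows "Dl = 0\<^sub>m (n+n) (n+n)"
proof -
  let ?c = "complex_of_real (1 / sqrt (real n))"
  let ?W = "four_block_mat (FH n) (0\<^sub>m n n) (0\<^sub>m n n) (FH n)"
  let ?Fb = "four_block_mat (dft n) (0\<^sub>m n n) (0\<^sub>m n n) (dft n)"
  have W: "?W \<in> carrier_mat (n+n) (n+n)" and Fb: "?Fb \<in> carrier_mat (n+n) (n+n)" by auto
  have WF: "?W * ?Fb = 1\<^sub>m (n+n)"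
    by (subst mult_four_block_mat[OF FH_carrier zero_carrier_mat zero_carrier_mat FH_carrier
        dft_carrier zero_carrier_mat zero_carrier_mat dft_carrier], simp add: FH_F[OF n])
  have colW: "Dl *\<^sub>v col ?W j = 0\<^sub>v (n+n)" if j: "j < n + n" for j
  proof (cases "j < n")
    case True
    have "col ?W j = ?c \<cdot>\<^sub>v (fv n j @\<^sub>v 0\<^sub>v n)"
      using True col_FH[OF True] by (intro eq_vecI, auto simp: col_four_block_mat FH_entry fv_def mult.commute)
    thus ?thesis using mult_mat_vec[OF Dl, of "fv n j @\<^sub>v 0\<^sub>v n" ?c] k1[OF True] by simp
  next
    case False
    hence j': "j - n < n" using j by simp
    have "col ?W j = ?c \<cdot>\<^sub>v (0\<^sub>v n @\<^sub>v fv n (j - n))"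
      using False j col_FH[OF j'] by (intro eq_vecI, auto simp: col_four_block_mat FH_entry fv_def mult.commute)
    thus ?thesis using mult_mat_vec[OF Dl, of "0\<^sub>v n @\<^sub>v fv n (j - n)" ?c] k2[OF j'] by simp
  qed
  have DW: "Dl * ?W = 0\<^sub>m (n+n) (n+n)"
  proof (rule eq_matI)
    fix i j assume i: "i < dim_row (0\<^sub>m (n+n) (n+n) :: complex mat)" and j: "j < dim_col (0\<^sub>m (n+n) (n+n) :: complex mat)"
    have "(Dl * ?W) $$ (i,j) = (Dl *\<^sub>v col ?W j) $ i" using i j Dl by simp
    thus "(Dl * ?W) $$ (i,j) = 0\<^sub>m (n+n) (n+n) $$ (i,j)" using colW j i by simp
  qed (use Dl in auto)
  have "Dl = Dl * (?W * ?Fb)" unfolding WF using Dl by simp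
  also have "\<dots> = (Dl * ?W) * ?Fb" using assoc_mult_mat[OF Dl W Fb] by simp
  also have "\<dots> = 0\<^sub>m (n+n) (n+n)" unfolding DW using Fb by simp
  finally show ?thesis .
qed

lemma mode_comb: "(a1 \<cdot>\<^sub>v fv n k @\<^sub>v b1 \<cdot>\<^sub>v fv n k) + c \<cdot>\<^sub>v (a2 \<cdot>\<^sub>v fv n k @\<^sub>v b2 \<cdot>\<^sub>v fv n k)
   + d \<cdot>\<^sub>v (a3 \<cdot>\<^sub>v fv n k @\<^sub>v b3 \<cdot>\<^sub>v fv n k)
  = ((a1 + c * a2 + d * a3) \<cdot>\<^sub>v fv n k) @\<^sub>v ((b1 + c * b2 + d * b3) \<cdot>\<^sub>v fv n k)"
  by (rule eq_vecI, auto simp: algebra_simps)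

lemma zero_comb: "(0 \<cdot>\<^sub>v fv n k) @\<^sub>v (0 \<cdot>\<^sub>v fv n k) = (0\<^sub>v (n+n) :: complex vec)"
  by (rule eq_vecI, auto)

lemma Acc0_R4: assumes n: "n \<ge> 2" and p1: "Pi1 > 0" and p2: "Pi2 > 0" and p3: "Pi3 > 0"
  shows "cm (sysA n) - cm (Gm n Pi3) * cm (P0 n Pi1 Pi2 Pi3)
    = R4 n (\<lambda>k. 0) (\<lambda>k. 1) (\<lambda>k. - yf n Pi1 Pi3 k) (\<lambda>k. - zf n Pi1 Pi2 Pi3 k)"
proof -
  have n0: "n > 0" using n by simp
  have p: "Pi3 \<noteq> 0" using p3 by simp
  show ?thesis
    unfolding A_R4[OF n] G_R4[OF n0 p] cm_P0 M4_R4 R4_mult[OF n0] R4_minus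
    by (rule R4_eqI, auto simp: K0_yf p)
qed


lemma pw_lemma: assumes n: "n > 0" and k: "k < n"
  shows "R4 n (\<lambda>k. 0) (\<lambda>k. 1) (\<lambda>k. - yk k) (\<lambda>k. - zk k) *\<^sub>v
      (R4 n (\<lambda>k. 0) (\<lambda>k. 1) (\<lambda>k. - yk k) (\<lambda>k. - zk k) *\<^sub>v ((\<alpha> \<cdot>\<^sub>v fv n k) @\<^sub>v (\<beta> \<cdot>\<^sub>v fv n k)))
    + complex_of_real (zk k) \<cdot>\<^sub>v (R4 n (\<lambda>k. 0) (\<lambda>k. 1) (\<lambda>k. - yk k) (\<lambda>k. - zk k) *\<^sub>v ((\<alpha> \<cdot>\<^sub>v fv n k) @\<^sub>v (\<beta> \<cdot>\<^sub>v fv n k)))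
    + complex_of_real (yk k) \<cdot>\<^sub>v ((\<alpha> \<cdot>\<^sub>v fv n k) @\<^sub>v (\<beta> \<cdot>\<^sub>v fv n k)) = 0\<^sub>v (n+n)"
  unfolding R4_mv[OF n k] mode_comb
  by (rule eq_vecI, auto simp: algebra_simps)

lemma uniq: assumes n: "n \<ge> 2" and p1: "Pi1 > 0" and p2: "Pi2 > 0" and p3: "Pi3 > 0"
  and sol: "riccati_spd_solution n Pi1 Pi2 Pi3 P"
  shows "P = P0 n Pi1 Pi2 Pi3"
proof -
  have n0: "n > 0" using n by simp
  have p: "Pi3 \<noteq> 0" using p3 by simp
  have nn: "2 * n = n + n" by simp
  define m where "m = n + n"
  have spd: "sym_pos_def m P" and ric: "P * sysA n + transpose_mat (sysA n) * P
       - P * sysB n * Rinv n Pi3 * transpose_mat (sysB n) * P + weightQ n Pi1 Pi2 = 0\<^sub>m m m"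
    using sol unfolding riccati_spd_solution_def nn m_def by auto
  have Pc: "P \<in> carrier_mat m m" and Ps: "transpose_mat P = P" using spd unfolding sym_pos_def_def by auto
  define A where "A = sysA n"
  define AT where "AT = transpose_mat (sysA n)"
  define G where "G = Gm n Pi3"
  define Q where "Q = weightQ n Pi1 Pi2"
  define P0' where "P0' = P0 n Pi1 Pi2 Pi3"
  have Ac: "A \<in> carrier_mat m m" and ATc: "AT \<in> carrier_mat m m" and Gc: "G \<in> carrier_mat m m"
    and Qc: "Q \<in> carrier_mat m m" and P0c: "P0' \<in> carrier_mat m m"
    unfolding A_def AT_def G_def Q_def P0'_def m_def using Gm_carrier[OF p] by auto
  have ricR: "P * A + AT * P - P * G * P + Q = 0\<^sub>m m m"
    using ric unfolding A_def AT_def G_def Q_def ric_assoc[OF Pc[unfolded m_def] p] .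
  have ric0R: "P0' * A + AT * P0' - P0' * G * P0' + Q = 0\<^sub>m m m"
    using P0_ric[OF n p1 p2 p3] unfolding A_def AT_def G_def Q_def P0'_def m_def
      ric_assoc[OF P0_carrier p] .
  have ricC: "cm P * cm A + cm AT * cm P - cm P * cm G * cm P + cm Q = 0\<^sub>m m m"
    using arg_cong[OF ricR, of cm] unfolding cm_ric[OF Pc Ac ATc Gc Qc] by simp
  have ric0C: "cm P0' * cm A + cm AT * cm P0' - cm P0' * cm G * cm P0' + cm Q = 0\<^sub>m m m"
    using arg_cong[OF ric0R, of cm] unfolding cm_ric[OF P0c Ac ATc Gc Qc] by simp
  have cc: "cm P \<in> carrier_mat m m" "cm P0' \<in> carrier_mat m m" "cm A \<in> carrier_mat m m"
    "cm AT \<in> carrier_mat m m" "cm G \<in> carrier_mat m m" "cm Q \<in> carrier_mat m m"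
    using Pc P0c Ac ATc Gc Qc by auto
  define Dl where "Dl = cm P - cm P0'"
  have Dlc: "Dl \<in> carrier_mat m m" unfolding Dl_def using cc by auto
  have D: "Dl * (cm A - cm G * cm P0') + (cm AT - cm P * cm G) * Dl = 0\<^sub>m m m"
    unfolding Dl_def by (rule ric_diff[OF cc(1,2,3,4,5,6) ricC ric0C])
  have Ly: "(cm AT - cm P * cm G) * cm P + cm P * (cm A - cm G * cm P) + (cm Q + cm P * cm G * cm P) = 0\<^sub>m m m"
    by (rule lyap[OF cc(1,3,4,5,6) ricC])
  define Acr where "Acr = A - G * P"
  have Acrc: "Acr \<in> carrier_mat m m" unfolding Acr_def using Ac Gc Pc by auto
  have AccE: "cm Acr = cm A - cm G * cm P"
    unfolding Acr_def using cm_minus[OF Ac mult_carrier_mat[OF Gc Pc]] cm_mult[OF Gc Pc] by simp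
  have TE: "transpose_mat (cm Acr) = cm AT - cm P * cm G"
  proof -
    have "transpose_mat Acr = AT - P * G"
      unfolding Acr_def AT_def A_def
      using transpose_minus[OF Ac[unfolded A_def] mult_carrier_mat[OF Gc Pc]] transpose_mult[OF Gc Pc] Ps
        Gm_sym[OF p] unfolding G_def by simp
    hence "cm (transpose_mat Acr) = cm AT - cm P * cm G"
      using cm_minus[OF ATc mult_carrier_mat[OF Pc Gc]] cm_mult[OF Pc Gc] by simp
    thus ?thesis unfolding cm_transpose .
  qed
  define Qt where "Qt = cm Q + cm P * cm G * cm P"
  have Qtc: "Qt \<in> carrier_mat m m" unfolding Qt_def using cc by auto
  have Ly': "transpose_mat (cm Acr) * cm P + cm P * cm Acr + Qt = 0\<^sub>m m m"
    unfolding TE unfolding AccE Qt_def using Ly .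
  have Ppos: "\<And>v. v \<in> carrier_vec m \<Longrightarrow> v \<noteq> 0\<^sub>v m \<Longrightarrow> \<exists>r>0. hf v (cm P *\<^sub>v v) = complex_of_real r"
    by (rule hf_pd[OF spd])
  have Qpos: "\<exists>r>0. hf v (Qt *\<^sub>v v) = complex_of_real r" if v: "v \<in> carrier_vec m" and v0: "v \<noteq> 0\<^sub>v m" for v
  proof -
    have Pv: "cm P *\<^sub>v v \<in> carrier_vec m" using cc v by auto
    have GPv: "cm G *\<^sub>v (cm P *\<^sub>v v) \<in> carrier_vec m" using cc Pv by auto
    have e1: "Qt *\<^sub>v v = cm Q *\<^sub>v v + cm P *\<^sub>v (cm G *\<^sub>v (cm P *\<^sub>v v))"
      unfolding Qt_def using cc v
      by (simp add: add_mult_distrib_mat_vec[of _ m m] assoc_mult_mat_vec[of _ m m _ m])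
    have e2: "hf v (cm P *\<^sub>v (cm G *\<^sub>v (cm P *\<^sub>v v))) = hf (cm P *\<^sub>v v) (cm G *\<^sub>v (cm P *\<^sub>v v))"
      using hf_adj[OF cc(1) v GPv] unfolding adj_real Ps .
    have hq: "hf v (Qt *\<^sub>v v) = hf v (cm Q *\<^sub>v v) + hf (cm P *\<^sub>v v) (cm G *\<^sub>v (cm P *\<^sub>v v))"
      unfolding e1 e2[symmetric] using cc v GPv by (simp add: hf_add_right)
    have "\<exists>r. hf (cm P *\<^sub>v v) (cm G *\<^sub>v (cm P *\<^sub>v v)) = complex_of_real r \<and> r \<ge> 0"
      unfolding G_def G_R4[OF n0 p] M4_R4[symmetric] by (rule hf_M4_nonneg[OF n0 Pv[unfolded m_def]], auto)
    then obtain r1 where r1: "r1 \<ge> 0" "hf (cm P *\<^sub>v v) (cm G *\<^sub>v (cm P *\<^sub>v v)) = complex_of_real r1" by auto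
    have "\<exists>r. hf v (cm Q *\<^sub>v v) = complex_of_real r \<and> r > 0"
      unfolding Q_def Q_R4[OF n] M4_R4[symmetric]
    proof (rule hf_M4_pos[OF n0 v[unfolded m_def] v0[unfolded m_def]])
      fix k assume "k < n"
      show "1 - Pi1 * Dhat n k > 0 \<and> Pi2 > 0 \<and> (1 - Pi1 * Dhat n k) * Pi2 > 0^2"
        using q1_pos[OF p1 p2 p3, of n k] p2 by simp
    qed
    then obtain r2 where r2: "r2 > 0" "hf v (cm Q *\<^sub>v v) = complex_of_real r2" by auto
    have "hf v (Qt *\<^sub>v v) = complex_of_real (r2 + r1)" unfolding hq r1(2) r2(2) by simp
    moreover have "r2 + r1 > 0" using r1 r2 by simp
    ultimately show ?thesis by blast
  qed
  have stab: "Re \<rho> < 0" if w: "w \<in> carrier_vec m" and w0: "w \<noteq> 0\<^sub>v m"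
    and e: "transpose_mat (cm Acr) *\<^sub>v w = \<rho> \<cdot>\<^sub>v w" for w \<rho>
  proof -
    obtain v where v: "v \<in> carrier_vec m" "v \<noteq> 0\<^sub>v m" "cm Acr *\<^sub>v v = \<rho> \<cdot>\<^sub>v v"
      using eig_transpose[OF _ w w0 e] Acrc by auto
    show ?thesis by (rule hurwitz[OF Acrc Pc Ps Qtc Ppos Qpos Ly' v])
  qed
  define T where "T = transpose_mat (cm Acr)"
  have Tc: "T \<in> carrier_mat m m" unfolding T_def using Acrc by auto
  define A0 where "A0 = cm A - cm G * cm P0'"
  have A0c: "A0 \<in> carrier_mat m m" unfolding A0_def using cc by auto
  have A0E: "A0 = R4 n (\<lambda>k. 0) (\<lambda>k. 1) (\<lambda>k. - yf n Pi1 Pi3 k) (\<lambda>k. - zf n Pi1 Pi2 Pi3 k)"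
    unfolding A0_def A_def G_def P0'_def by (rule Acc0_R4[OF n p1 p2 p3])
  have rel: "Dl *\<^sub>v (A0 *\<^sub>v x) + T *\<^sub>v (Dl *\<^sub>v x) = 0\<^sub>v m" if x: "x \<in> carrier_vec m" for x
  proof -
    have "0\<^sub>v m = (Dl * A0 + T * Dl) *\<^sub>v x"
      using D x unfolding T_def TE A0_def by simp
    also have "\<dots> = Dl *\<^sub>v (A0 *\<^sub>v x) + T *\<^sub>v (Dl *\<^sub>v x)"
      using Dlc A0c Tc x
      by (simp add: add_mult_distrib_mat_vec[of _ m m] assoc_mult_mat_vec[of _ m m _ m])
    finally show ?thesis by simp
  qed
  have stab': "\<And>w \<rho>. w \<in> carrier_vec m \<Longrightarrow> w \<noteq> 0\<^sub>v m \<Longrightarrow> T *\<^sub>v w = \<rho> \<cdot>\<^sub>v w \<Longrightarrow> Re \<rho> < 0"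
  proof -
    fix w \<rho> assume "w \<in> carrier_vec m" "w \<noteq> 0\<^sub>v m" "T *\<^sub>v w = \<rho> \<cdot>\<^sub>v w"
    thus "Re \<rho> < 0" unfolding T_def by (rule stab)
  qed
  have kill: "Dl *\<^sub>v ((\<alpha> \<cdot>\<^sub>v fv n k) @\<^sub>v (\<beta> \<cdot>\<^sub>v fv n k)) = 0\<^sub>v m" if k: "k < n" for k \<alpha> \<beta>
  proof -
    have wc: "(\<alpha> \<cdot>\<^sub>v fv n k) @\<^sub>v (\<beta> \<cdot>\<^sub>v fv n k) \<in> carrier_vec m" unfolding m_def by simp
    have pw: "A0 *\<^sub>v (A0 *\<^sub>v ((\<alpha> \<cdot>\<^sub>v fv n k) @\<^sub>v (\<beta> \<cdot>\<^sub>v fv n k))) +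
      complex_of_real (zf n Pi1 Pi2 Pi3 k) \<cdot>\<^sub>v (A0 *\<^sub>v ((\<alpha> \<cdot>\<^sub>v fv n k) @\<^sub>v (\<beta> \<cdot>\<^sub>v fv n k))) +
      complex_of_real (yf n Pi1 Pi3 k) \<cdot>\<^sub>v ((\<alpha> \<cdot>\<^sub>v fv n k) @\<^sub>v (\<beta> \<cdot>\<^sub>v fv n k)) = 0\<^sub>v m"
      unfolding A0E m_def by (rule pw_lemma[OF n0 k])
    show ?thesis by (rule kill_mode[OF Dlc Tc A0c rel stab' zf_pos[OF p1 p2 p3] yf_pos[OF p1 p2 p3] wc pw])
  qed
  have "Dl = 0\<^sub>m (n+n) (n+n)"
  proof (rule Dl_zero[OF n0 Dlc[unfolded m_def]])
    fix k assume k: "k < n"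
    have "fv n k @\<^sub>v 0\<^sub>v n = (1 \<cdot>\<^sub>v fv n k) @\<^sub>v (0 \<cdot>\<^sub>v fv n k)" by (rule eq_vecI, auto)
    thus "Dl *\<^sub>v (fv n k @\<^sub>v 0\<^sub>v n) = 0\<^sub>v (n+n)" using kill[OF k, of 1 0] unfolding m_def by simp
    have "0\<^sub>v n @\<^sub>v fv n k = (0 \<cdot>\<^sub>v fv n k) @\<^sub>v (1 \<cdot>\<^sub>v fv n k)" by (rule eq_vecI, auto)
    thus "Dl *\<^sub>v (0\<^sub>v n @\<^sub>v fv n k) = 0\<^sub>v (n+n)" using kill[OF k, of 0 1] unfolding m_def by simp
  qed
  hence "cm P = cm P0'"
    unfolding Dl_def using cc by (auto simp: mat_eq_iff m_def)
  thus ?thesis using cm_inj unfolding P0'_def by blast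
qed

lemma gain_P0: assumes n: "n \<ge> 2" and p1: "Pi1 > 0" and p2: "Pi2 > 0" and p3: "Pi3 > 0"
  shows "cm (lqr_gain n Pi3 (P0 n Pi1 Pi2 Pi3)) = four_block_mat
    (Cc n (\<lambda>k. complex_of_real (K0hat n Pi1 Pi3 k))) (Cc n (\<lambda>k. complex_of_real (zf n Pi1 Pi2 Pi3 k)))
    (0\<^sub>m 0 n) (0\<^sub>m 0 n)"
proof -
  have n0: "n > 0" using n by simp
  have p: "Pi3 \<noteq> 0" using p3 by simp
  let ?s = "Pi3^2"
  let ?b = "\<lambda>k. K0hat n Pi1 Pi3 k / Pi3^2" and ?d = "\<lambda>k. zf n Pi1 Pi2 Pi3 k / Pi3^2"
  let ?a = "\<lambda>k. zf n Pi1 Pi2 Pi3 k * yf n Pi1 Pi3 k / Pi3^2"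
  have BT: "transpose_mat (sysB n) = four_block_mat (0\<^sub>m n n) (1\<^sub>m n) (0\<^sub>m 0 n) (0\<^sub>m 0 n)"
    unfolding sysB_def by (subst transpose_four_block_mat, auto)
  have BTc: "transpose_mat (sysB n) \<in> carrier_mat n (n+n)" by simp
  have BP: "transpose_mat (sysB n) * P0 n Pi1 Pi2 Pi3 = four_block_mat (Cr n ?b) (Cr n ?d) (0\<^sub>m 0 n) (0\<^sub>m 0 n)"
  proof -
    have "transpose_mat (sysB n) * P0 n Pi1 Pi2 Pi3 = four_block_mat (0\<^sub>m n n * Cr n ?a + 1\<^sub>m n * Cr n ?b)
       (0\<^sub>m n n * Cr n ?b + 1\<^sub>m n * Cr n ?d) (0\<^sub>m 0 n * Cr n ?a + 0\<^sub>m 0 n * Cr n ?b)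
       (0\<^sub>m 0 n * Cr n ?b + 0\<^sub>m 0 n * Cr n ?d)"
      unfolding BT P0_def
      by (rule mult_four_block_mat[OF zero_carrier_mat one_carrier_mat zero_carrier_mat zero_carrier_mat
          Cr_carrier Cr_carrier Cr_carrier Cr_carrier])
    also have "\<dots> = four_block_mat (Cr n ?b) (Cr n ?d) (0\<^sub>m 0 n) (0\<^sub>m 0 n)"
      by (intro cong_four_block_mat; rule eq_matI; simp add: scalar_prod_def)
    finally show ?thesis .
  qed
  have "lqr_gain n Pi3 (P0 n Pi1 Pi2 Pi3) = (?s \<cdot>\<^sub>m 1\<^sub>m n) * transpose_mat (sysB n) * P0 n Pi1 Pi2 Pi3"
    unfolding lqr_gain_def Rinv_eq[OF p] ..
  also have "\<dots> = ?s \<cdot>\<^sub>m (transpose_mat (sysB n) * P0 n Pi1 Pi2 Pi3)"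
  proof -
    have "(?s \<cdot>\<^sub>m 1\<^sub>m n) * transpose_mat (sysB n) = ?s \<cdot>\<^sub>m (1\<^sub>m n * transpose_mat (sysB n))"
      by (rule mult_smult_assoc_mat[OF one_carrier_mat BTc])
    also have "\<dots> = ?s \<cdot>\<^sub>m transpose_mat (sysB n)" unfolding left_mult_one_mat[OF BTc] ..
    finally have "(?s \<cdot>\<^sub>m 1\<^sub>m n) * transpose_mat (sysB n) * P0 n Pi1 Pi2 Pi3
       = (?s \<cdot>\<^sub>m transpose_mat (sysB n)) * P0 n Pi1 Pi2 Pi3" by simp
    also have "\<dots> = ?s \<cdot>\<^sub>m (transpose_mat (sysB n) * P0 n Pi1 Pi2 Pi3)"
      by (rule mult_smult_assoc_mat[OF BTc P0_carrier])
    finally show ?thesis .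
  qed
  also have "\<dots> = four_block_mat (?s \<cdot>\<^sub>m Cr n ?b) (?s \<cdot>\<^sub>m Cr n ?d) (0\<^sub>m 0 n) (0\<^sub>m 0 n)"
    unfolding BP by (rule eq_matI, auto)
  finally have L: "lqr_gain n Pi3 (P0 n Pi1 Pi2 Pi3) = four_block_mat (?s \<cdot>\<^sub>m Cr n ?b) (?s \<cdot>\<^sub>m Cr n ?d) (0\<^sub>m 0 n) (0\<^sub>m 0 n)" .
  have e1: "cm (?s \<cdot>\<^sub>m Cr n ?b) = Cc n (\<lambda>k. complex_of_real (K0hat n Pi1 Pi3 k))"
    unfolding cm_smult Cr_Cc[OF sym_fns(2)] Cc_smult using p by simp
  have e2: "cm (?s \<cdot>\<^sub>m Cr n ?d) = Cc n (\<lambda>k. complex_of_real (zf n Pi1 Pi2 Pi3 k))"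
    unfolding cm_smult Cr_Cc[OF sym_fns(3)] Cc_smult using p by simp
  show ?thesis unfolding L
    by (subst map_four_block_mat[OF smult_carrier_mat[OF Cr_carrier] smult_carrier_mat[OF Cr_carrier]
        zero_carrier_mat zero_carrier_mat], simp add: e1 e2)
qed

theorem lemma3:
  fixes n :: nat and Pi1 Pi2 Pi3 :: real
  assumes "n \<ge> 2" and "Pi1 > 0" and "Pi2 > 0" and "Pi3 > 0"
  shows "(\<exists>P. riccati_spd_solution n Pi1 Pi2 Pi3 P) \<and>
    (\<forall>P. riccati_spd_solution n Pi1 Pi2 Pi3 P \<longrightarrow>
       map_mat complex_of_real (lqr_gain n Pi3 P) =
       four_block_mat
         (the (mat_inverse (dft n)) * mat_diag n (\<lambda>k. complex_of_real (K0hat n Pi1 Pi3 k)) * dft n)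
         (the (mat_inverse (dft n)) *
            mat_diag n (\<lambda>k. complex_of_real (sqrt (2 * K0hat n Pi1 Pi3 k + Pi2 * Pi3^2))) * dft n)
         (0\<^sub>m 0 n) (0\<^sub>m 0 n))"
proof
  show "\<exists>P. riccati_spd_solution n Pi1 Pi2 Pi3 P" using P0_spd[OF assms] by blast
  have n0: "n > 0" using assms(1) by simp
  show "\<forall>P. riccati_spd_solution n Pi1 Pi2 Pi3 P \<longrightarrow>
       map_mat complex_of_real (lqr_gain n Pi3 P) =
       four_block_mat
         (the (mat_inverse (dft n)) * mat_diag n (\<lambda>k. complex_of_real (K0hat n Pi1 Pi3 k)) * dft n)
         (the (mat_inverse (dft n)) *
            mat_diag n (\<lambda>k. complex_of_real (sqrt (2 * K0hat n Pi1 Pi3 k + Pi2 * Pi3^2))) * dft n)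
         (0\<^sub>m 0 n) (0\<^sub>m 0 n)"
  proof (intro allI impI)
    fix P assume sol: "riccati_spd_solution n Pi1 Pi2 Pi3 P"
    have "P = P0 n Pi1 Pi2 Pi3" by (rule uniq[OF assms sol])
    thus "map_mat complex_of_real (lqr_gain n Pi3 P) =
       four_block_mat
         (the (mat_inverse (dft n)) * mat_diag n (\<lambda>k. complex_of_real (K0hat n Pi1 Pi3 k)) * dft n)
         (the (mat_inverse (dft n)) *
            mat_diag n (\<lambda>k. complex_of_real (sqrt (2 * K0hat n Pi1 Pi3 k + Pi2 * Pi3^2))) * dft n)
         (0\<^sub>m 0 n) (0\<^sub>m 0 n)"
      using gain_P0[OF assms] unfolding dft_inverse[OF n0] Cc_fact[OF n0] zf_def by simp
  qed
qed

end
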